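(* Assume $a>0$, $b>0$. Let $w,w'\in W_n$ be such that $w\smile_1 w'$. Then $w\sim_R w'$.
   Context: $W_n$ is the Weyl group of type $B_n$ with Coxeter generators $t,s_1,\dots,s_{n-1}$ ($(ts_1)^4=1$, $(s_is_{i+1})^3=1$, other distinct pairs commute), identified with the permutations $w$ of $\{\pm1,\dots,\pm n\}$ with $w(-i)=-w(i)$ via $t\mapsto(1,-1)$, $s_i\mapsto(i,i+1)(-i,-i-1)$. For $w,w'\in W_n$, $w\smile_1 w'$ means: there exists $i$ with $2\le i\le n-1$ and $w(i)<w(i-1)<w(i+1)$, or $1\le i\le n-2$ and $w(i)<w(i+2)<w(i+1)$, such that $w'=ws_i$. $\Gamma$ is a totally ordered abelian group, $a,b\in\Gamma$, $\varphi(t)=b$, $\varphi(s_i)=a$. $A=\mathbb{Z}[\Gamma]$, $Q=e^b$, $q=e^a$, $A_{<0}=\bigoplus_{\gamma<0}\mathbb{Z}e^\gamma$. $\mathcal{H}_n$ is the Hecke algebra over $A$ with basis $(T_w)$, $T_wT_{w'}=T_{ww'}$ when lengths add, $(T_t-Q)(T_t+Q^{-1})=0$, $(T_{s_i}-q)(T_{s_i}+q^{-1})=0$; bar involution $\overline{e^\gamma}=e^{-\gamma}$, $\overline{T_w}=T_{w^{-1}}^{-1}$; $C_w$ is the unique bar-invariant element with $C_w-T_w\in\bigoplus A_{<0}T_w$. Write $x\leftarrow_R y$ if for some $h\in\mathcal{H}_n$ the coefficient of $C_x$ in $C_yh$ is nonzero; $\le_R$ is its transitive closure and $x\sim_R y$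 means $x\le_R y$ and $y\le_R x$ (Kazhdan–Lusztig right cells). *)

theory Defs
  imports Main "HOL-Library.Poly_Mapping"
begin

type_synonym 'g grpring = "'g \<Rightarrow>\<^sub>0 int"

definition expo :: "'g::linordered_ab_group_add \<Rightarrow> 'g grpring" where
  "expo \<gamma> = Poly_Mapping.single \<gamma> 1"

definition barA :: "'g::linordered_ab_group_add grpring \<Rightarrow> 'g grpring" where
  "barA p = (\<Sum>\<gamma>\<in>Poly_Mapping.keys p. Poly_Mapping.single (- \<gamma>) (Poly_Mapping.lookup p \<gamma>))"

definition Aneg :: "'g::linordered_ab_group_add grpring set" where
  "Aneg = {p. \<forall>\<gamma>\<in>Poly_Mapping.keys p. \<gamma> < 0}"

section \<open>The Weyl group W_n of type B_n as signed permutations\<close>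

definition signed_dom :: "nat \<Rightarrow> int set" where
  "signed_dom n = {i. 1 \<le> \<bar>i\<bar> \<and> \<bar>i\<bar> \<le> int n}"

definition Wn :: "nat \<Rightarrow> (int \<Rightarrow> int) set" where
  "Wn n = {w. bij_betw w (signed_dom n) (signed_dom n) \<and> (\<forall>i. w (- i) = - w i)
              \<and> (\<forall>i. i \<notin> signed_dom n \<longrightarrow> w i = i)}"

definition tgen :: "int \<Rightarrow> int" where
  "tgen = (\<lambda>j. if j = 1 then -1 else if j = -1 then 1 else j)"

definition sgen :: "int \<Rightarrow> int \<Rightarrow> int" where
  "sgen i = (\<lambda>j. if j = i then i + 1 else if j = i + 1 then i
               else if j = - i then - i - 1 else if j = - i - 1 then - i else j)"

definition Sgens :: "nat \<Rightarrow> (int \<Rightarrow> int) set" where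
  "Sgens n = {tgen} \<union> {sgen i | i. 1 \<le> i \<and> i \<le> int n - 1}"

text \<open>Coxeter length with respect to the generators; a word [s1,...,sk] represents
  the product s1 s2 ... sk, i.e. the composition s1 o s2 o ... o sk.\<close>
definition word_prod :: "(int \<Rightarrow> int) list \<Rightarrow> (int \<Rightarrow> int)" where
  "word_prod ws = foldr (\<circ>) ws id"

definition clen :: "nat \<Rightarrow> (int \<Rightarrow> int) \<Rightarrow> nat" where
  "clen n w = (LEAST k. \<exists>ws. length ws = k \<and> set ws \<subseteq> Sgens n \<and> word_prod ws = w)"

definition red_word :: "nat \<Rightarrow> (int \<Rightarrow> int) \<Rightarrow> (int \<Rightarrow> int) list" where
  "red_word n w = (SOME ws. set ws \<subseteq> Sgens n \<and> word_prod ws = w \<and> length ws = clen n w)"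

section \<open>The Hecke algebra H_n (via its right regular representation)\<close>

text \<open>An element sum_w c_w T_w of H_n is represented by its coefficient function
  (int => int) => A (supported on W_n).\<close>
type_synonym 'g hmod = "(int \<Rightarrow> int) \<Rightarrow> 'g grpring"

definition vpar :: "'g::linordered_ab_group_add \<Rightarrow> 'g \<Rightarrow> (int \<Rightarrow> int) \<Rightarrow> 'g grpring" where
  "vpar a b s = (if s = tgen then expo b else expo a)"

definition vinv :: "'g::linordered_ab_group_add \<Rightarrow> 'g \<Rightarrow> (int \<Rightarrow> int) \<Rightarrow> 'g grpring" where
  "vinv a b s = (if s = tgen then expo (- b) else expo (- a))"

definition Tb :: "(int \<Rightarrow> int) \<Rightarrow> 'g::linordered_ab_group_add hmod" where
  "Tb w = (\<lambda>y. if y = w then 1 else 0)"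

text \<open>Right multiplication by T_s:
  T_w T_s = T_{ws} if l(ws) > l(w), and T_{ws} + (v_s - v_s^{-1}) T_w otherwise.\<close>
definition rmulT :: "nat \<Rightarrow> 'g::linordered_ab_group_add \<Rightarrow> 'g \<Rightarrow> (int \<Rightarrow> int)
                      \<Rightarrow> 'g hmod \<Rightarrow> 'g hmod" where
  "rmulT n a b s m = (\<lambda>y. m (y \<circ> s) +
      (if clen n (y \<circ> s) < clen n y then (vpar a b s - vinv a b s) * m y else 0))"

text \<open>Right multiplication by T_s^{-1} = T_s - (v_s - v_s^{-1}).\<close>
definition rmulTinv :: "nat \<Rightarrow> 'g::linordered_ab_group_add \<Rightarrow> 'g \<Rightarrow> (int \<Rightarrow> int)
                      \<Rightarrow> 'g hmod \<Rightarrow> 'g hmod" where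
  "rmulTinv n a b s m = (\<lambda>y. rmulT n a b s m y - (vpar a b s - vinv a b s) * m y)"

text \<open>The Hecke algebra, as the A-algebra of operators (right multiplications) on the
  free module with basis (T_w) generated by the right multiplications by the T_s.\<close>
inductive_set hecke :: "nat \<Rightarrow> 'g::linordered_ab_group_add \<Rightarrow> 'g
                        \<Rightarrow> ('g hmod \<Rightarrow> 'g hmod) set" for n a b where
  scal: "(\<lambda>m y. c * m y) \<in> hecke n a b"
| gen: "s \<in> Sgens n \<Longrightarrow> rmulT n a b s \<in> hecke n a b"
| add: "f \<in> hecke n a b \<Longrightarrow> g \<in> hecke n a b \<Longrightarrow> (\<lambda>m y. f m y + g m y) \<in> hecke n a b"
| comp: "f \<in> hecke n a b \<Longrightarrow> g \<in> hecke n a b \<Longrightarrow> f \<circ> g \<in> hecke n a b"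

text \<open>T_{w^{-1}}^{-1} = T_{s1}^{-1} ... T_{sk}^{-1} for a reduced expression w = s1...sk.\<close>
definition Tinvbar :: "nat \<Rightarrow> 'g::linordered_ab_group_add \<Rightarrow> 'g \<Rightarrow> (int \<Rightarrow> int) \<Rightarrow> 'g hmod" where
  "Tinvbar n a b w = fold (rmulTinv n a b) (red_word n w) (Tb id)"

text \<open>Bar involution: sum a_w T_w  |->  sum bar(a_w) T_{w^{-1}}^{-1}.\<close>
definition barH :: "nat \<Rightarrow> 'g::linordered_ab_group_add \<Rightarrow> 'g \<Rightarrow> 'g hmod \<Rightarrow> 'g hmod" where
  "barH n a b m = (\<lambda>y. \<Sum>w\<in>Wn n. barA (m w) * Tinvbar n a b w y)"

definition KLC :: "nat \<Rightarrow> 'g::linordered_ab_group_add \<Rightarrow> 'g \<Rightarrow> (int \<Rightarrow> int) \<Rightarrow> 'g hmod" where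
  "KLC n a b w = (THE C. (\<forall>y. y \<notin> Wn n \<longrightarrow> C y = 0) \<and> barH n a b C = C
                     \<and> C w - 1 \<in> Aneg \<and> (\<forall>y. y \<noteq> w \<longrightarrow> C y \<in> Aneg))"

definition coeffC :: "nat \<Rightarrow> 'g::linordered_ab_group_add \<Rightarrow> 'g \<Rightarrow> (int \<Rightarrow> int) \<Rightarrow> 'g hmod \<Rightarrow> 'g grpring" where
  "coeffC n a b x m = (THE c. (\<forall>w. w \<notin> Wn n \<longrightarrow> c w = 0)
                          \<and> m = (\<lambda>y. \<Sum>w\<in>Wn n. c w * KLC n a b w y)) x"

definition arrowR :: "nat \<Rightarrow> 'g::linordered_ab_group_add \<Rightarrow> 'g \<Rightarrow> (int \<Rightarrow> int) \<Rightarrow> (int \<Rightarrow> int) \<Rightarrow> bool" where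
  "arrowR n a b x y \<longleftrightarrow> x \<in> Wn n \<and> y \<in> Wn n \<and>
     (\<exists>h\<in>hecke n a b. coeffC n a b x (h (KLC n a b y)) \<noteq> 0)"

definition leR :: "nat \<Rightarrow> 'g::linordered_ab_group_add \<Rightarrow> 'g \<Rightarrow> (int \<Rightarrow> int) \<Rightarrow> (int \<Rightarrow> int) \<Rightarrow> bool" where
  "leR n a b = (arrowR n a b)\<^sup>+\<^sup>+"

definition simR :: "nat \<Rightarrow> 'g::linordered_ab_group_add \<Rightarrow> 'g \<Rightarrow> (int \<Rightarrow> int) \<Rightarrow> (int \<Rightarrow> int) \<Rightarrow> bool" where
  "simR n a b x y \<longleftrightarrow> leR n a b x y \<and> leR n a b y x"

definition smile1 :: "nat \<Rightarrow> (int \<Rightarrow> int) \<Rightarrow> (int \<Rightarrow> int) \<Rightarrow> bool" where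
  "smile1 n w w' \<longleftrightarrow> (\<exists>i::int.
     ((2 \<le> i \<and> i \<le> int n - 1 \<and> w i < w (i - 1) \<and> w (i - 1) < w (i + 1)) \<or>
      (1 \<le> i \<and> i \<le> int n - 2 \<and> w i < w (i + 2) \<and> w (i + 2) < w (i + 1)))
     \<and> w' = w \<circ> sgen i)"

end

theory Submission
  imports Defs "HOL-Library.FuncSet"
begin


lemma lookup_barA: "Poly_Mapping.lookup (barA p) g = Poly_Mapping.lookup p (- g)"
proof -
  have "Poly_Mapping.lookup (barA p) g = (\<Sum>d\<in>Poly_Mapping.keys p. (if d = - g then Poly_Mapping.lookup p d else 0))"
    unfolding barA_def lookup_sum by (intro sum.cong) (auto simp: lookup_single when_def)
  also have "\<dots> = Poly_Mapping.lookup p (- g)"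
    by (simp add: sum.delta in_keys_iff)
  finally show ?thesis .
qed

lemma barA_add: "barA (p + q) = barA p + barA q"
  by (rule poly_mapping_eqI) (simp add: lookup_barA lookup_add)
lemma barA_diff: "barA (p - q) = barA p - barA q"
  by (rule poly_mapping_eqI) (simp add: lookup_barA lookup_minus)
lemma barA_uminus: "barA (- p) = - barA p"
  by (rule poly_mapping_eqI) (simp add: lookup_barA)
lemma barA_zero[simp]: "barA 0 = 0"
  by (rule poly_mapping_eqI) (simp add: lookup_barA)
lemma barA_single: "barA (Poly_Mapping.single g c) = Poly_Mapping.single (-g) c"
  by (rule poly_mapping_eqI) (auto simp: lookup_barA lookup_single when_def)
lemma barA_one[simp]: "barA 1 = 1"
  by (rule poly_mapping_eqI) (simp add: lookup_barA lookup_one when_def)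
lemma barA_barA[simp]: "barA (barA p) = p"
  by (rule poly_mapping_eqI) (simp add: lookup_barA)
lemma barA_expo: "barA (expo g) = expo (- g)"
  by (simp add: expo_def barA_single)
lemma barA_sum: "barA (sum f S) = sum (\<lambda>x. barA (f x)) S"
  by (induction S rule: infinite_finite_induct) (auto simp: barA_add)

lemma barA_mult_single: "barA (Poly_Mapping.single x 1 * q) = barA (Poly_Mapping.single x 1) * barA (q :: 'g::linordered_ab_group_add grpring)"
  apply (rule frag_induction[of q UNIV, OF subset_UNIV])
    apply simp
   apply (simp add: mult_single barA_single add.commute)
  apply (simp add: algebra_simps barA_diff)
  done

lemma barA_mult: "barA (p * q) = barA p * barA (q :: 'g::linordered_ab_group_add grpring)"
  apply (rule frag_induction[of p UNIV, OF subset_UNIV])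
    apply simp
   apply (rule barA_mult_single)
  apply (simp add: algebra_simps barA_diff)
  done

lemma expo_mult: "expo a * expo b = expo (a + b)"
  by (simp add: expo_def mult_single)
lemma expo_zero[simp]: "expo 0 = 1"
  by (simp add: expo_def)

lemma Aneg_zero[simp]: "0 \<in> Aneg" by (simp add: Aneg_def)
lemma Aneg_iff: "p \<in> Aneg \<longleftrightarrow> (\<forall>g. Poly_Mapping.lookup p g \<noteq> 0 \<longrightarrow> g < 0)"
  by (auto simp: Aneg_def in_keys_iff)
lemma Aneg_add: "p \<in> Aneg \<Longrightarrow> q \<in> Aneg \<Longrightarrow> p + q \<in> Aneg"
  by (auto simp: Aneg_iff lookup_add) (metis add_0 add.right_neutral)
lemma Aneg_diff: "p \<in> Aneg \<Longrightarrow> q \<in> Aneg \<Longrightarrow> p - q \<in> Aneg"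
  by (auto simp: Aneg_iff lookup_minus) (metis diff_zero diff_0 minus_equation_iff)
lemma Aneg_uminus: "p \<in> Aneg \<Longrightarrow> - p \<in> Aneg"
  by (auto simp: Aneg_iff)
lemma Aneg_expo: "g < 0 \<Longrightarrow> expo g \<in> Aneg"
  by (auto simp: Aneg_iff expo_def lookup_single when_def)
lemma Aneg_bar_zero:
  assumes "p \<in> Aneg" "barA p = p" shows "p = 0"
proof (rule poly_mapping_eqI)
  fix g
  show "Poly_Mapping.lookup p g = Poly_Mapping.lookup 0 g"
  proof (rule ccontr)
    assume ne: "Poly_Mapping.lookup p g \<noteq> Poly_Mapping.lookup 0 g"
    hence "g < 0" using assms(1) by (auto simp: Aneg_iff)
    have "Poly_Mapping.lookup p g = Poly_Mapping.lookup p (- g)"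
      using assms(2) by (metis lookup_barA)
    hence "- g < 0" using ne assms(1) by (auto simp: Aneg_iff)
    with \<open>g < 0\<close> show False by simp
  qed
qed

lemma sym_exists: "\<exists>c. barA c = c \<and> p - c \<in> (Aneg :: 'g::linordered_ab_group_add grpring set)"
proof -
  define c :: "'g grpring" where "c = Abs_poly_mapping (\<lambda>g. if g < 0 then Poly_Mapping.lookup p (- g) else Poly_Mapping.lookup p g)"
  have fin: "finite {g. (if g < 0 then Poly_Mapping.lookup p (- g) else Poly_Mapping.lookup p g) \<noteq> 0}"
  proof -
    have "{g. (if g < 0 then Poly_Mapping.lookup p (- g) else Poly_Mapping.lookup p g) \<noteq> 0}
       \<subseteq> Poly_Mapping.keys p \<union> uminus ` Poly_Mapping.keys p"
    proof
      fix g assume "g \<in> {g. (if g < 0 then Poly_Mapping.lookup p (- g) else Poly_Mapping.lookup p g) \<noteq> 0}"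
      then show "g \<in> Poly_Mapping.keys p \<union> uminus ` Poly_Mapping.keys p"
        by (cases "g < 0") (auto simp: in_keys_iff intro!: image_eqI[where x="- g"])
    qed
    then show ?thesis by (rule finite_subset) simp
  qed
  have lc: "Poly_Mapping.lookup c g = (if g < 0 then Poly_Mapping.lookup p (- g) else Poly_Mapping.lookup p g)" for g
    unfolding c_def using fin by simp
  have "barA c = c"
    by (rule poly_mapping_eqI) (auto simp: lookup_barA lc)
  moreover have "p - c \<in> Aneg"
    by (auto simp: Aneg_iff lookup_minus lc split: if_splits)
  ultimately show ?thesis by blast
qed




lemma finite_D[simp]: "finite (signed_dom n)"
proof -
  have "signed_dom n \<subseteq> {- int n..int n}" by (auto simp: signed_dom_def)
  then show ?thesis by (rule finite_subset) simp
qed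

lemma in_D: "x \<in> signed_dom n \<longleftrightarrow> 1 \<le> \<bar>x\<bar> \<and> \<bar>x\<bar> \<le> int n"
  by (simp add: signed_dom_def)

lemma Wn_D: "y \<in> Wn n \<Longrightarrow> x \<in> signed_dom n \<Longrightarrow> y x \<in> signed_dom n"
  by (auto simp: Wn_def bij_betw_def)
lemma Wn_inj: "y \<in> Wn n \<Longrightarrow> x \<in> signed_dom n \<Longrightarrow> x' \<in> signed_dom n \<Longrightarrow> y x = y x' \<Longrightarrow> x = x'"
  by (auto simp: Wn_def bij_betw_def inj_on_def)
lemma Wn_odd: "y \<in> Wn n \<Longrightarrow> y (- x) = - y x"
  by (auto simp: Wn_def)
lemma Wn_out: "y \<in> Wn n \<Longrightarrow> x \<notin> signed_dom n \<Longrightarrow> y x = x"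
  by (auto simp: Wn_def)
lemma Wn_zero: "y \<in> Wn n \<Longrightarrow> y 0 = 0"
  using Wn_odd[of y n 0] by simp

lemma Wn_bij: assumes "y \<in> Wn n" shows "bij y"
proof -
  have b: "bij_betw y (signed_dom n) (signed_dom n)" using assms by (simp add: Wn_def)
  have b2: "bij_betw y (- signed_dom n) (- signed_dom n)"
    using Wn_out[OF assms] by (intro bij_betw_imageI) (auto simp: inj_on_def image_iff)
  have "bij_betw y (signed_dom n \<union> - signed_dom n) (signed_dom n \<union> - signed_dom n)"
    by (rule bij_betw_combine[OF b b2]) auto
  then show ?thesis by simp
qed

lemma Wn_intro:
  assumes "bij y" "\<And>x. y (- x) = - y x" "\<And>x. x \<notin> signed_dom n \<Longrightarrow> y x = x"
  shows "y \<in> Wn n"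
proof -
  have img: "y ` signed_dom n = signed_dom n"
  proof -
    have "y ` (- signed_dom n) = - signed_dom n" using assms(3) by (auto simp: image_iff)
    then show ?thesis using assms(1) by (metis bij_image_Compl_eq double_compl)
  qed
  have "bij_betw y (signed_dom n) (signed_dom n)"
    using assms(1) img by (metis bij_betw_def bij_betw_subset subset_UNIV)
  then show ?thesis using assms by (simp add: Wn_def)
qed

lemma Wn_comp: "y \<in> Wn n \<Longrightarrow> z \<in> Wn n \<Longrightarrow> y \<circ> z \<in> Wn n"
  by (rule Wn_intro) (auto simp: Wn_bij bij_comp Wn_odd Wn_out)

lemma id_Wn[simp]: "id \<in> Wn n"
  by (rule Wn_intro) auto

lemma Wn_inv: assumes "y \<in> Wn n" shows "inv y \<in> Wn n"
proof (rule Wn_intro)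
  have b: "bij y" using Wn_bij[OF assms] .
  show "bij (inv y)" using b by (simp add: bij_imp_bij_inv)
  show "inv y (- x) = - inv y x" for x
    using b by (metis Wn_odd[OF assms] bij_inv_eq_iff)
  show "inv y x = x" if "x \<notin> signed_dom n" for x
    using b that by (metis Wn_out[OF assms] bij_inv_eq_iff)
qed

lemma tgen_invol[simp]: "tgen \<circ> tgen = id"
  by (auto simp: tgen_def fun_eq_iff)
lemma sgen_invol[simp]: "0 < i \<Longrightarrow> sgen i \<circ> sgen i = id"
  by (auto simp: sgen_def fun_eq_iff)
lemma tgen_invol'[simp]: "tgen (tgen x) = x"
  using tgen_invol by (metis comp_apply id_apply)
lemma sgen_invol'[simp]: "0 < i \<Longrightarrow> sgen i (sgen i x) = x"
  using sgen_invol by (metis comp_apply id_apply)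

lemma tgen_Wn: "1 \<le> n \<Longrightarrow> tgen \<in> Wn n"
proof (rule Wn_intro)
  show "bij tgen" by (metis o_bij tgen_invol)
qed (auto simp: tgen_def in_D)

lemma sgen_Wn: "sgen i \<in> Wn n" if "1 \<le> i" "i \<le> int n - 1"
proof (rule Wn_intro)
  show "bij (sgen i)" using that by (metis o_bij sgen_invol zero_less_one_class.zero_less_one order_less_le_trans)
qed (use that in \<open>auto simp: sgen_def in_D\<close>)

lemma Sgens_cases:
  assumes "s \<in> Sgens n"
  obtains "s = tgen" | i where "1 \<le> i" "i \<le> int n - 1" "s = sgen i"
  using assms by (auto simp: Sgens_def)

lemma Sgens_Wn: "1 \<le> n \<Longrightarrow> s \<in> Sgens n \<Longrightarrow> s \<in> Wn n"
  by (auto elim!: Sgens_cases simp: tgen_Wn sgen_Wn)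

lemma Sgens_invol: "s \<in> Sgens n \<Longrightarrow> s \<circ> s = id"
  by (auto elim!: Sgens_cases)
lemma Sgens_invol': "s \<in> Sgens n \<Longrightarrow> s (s x) = x"
  by (auto elim!: Sgens_cases)

lemma tgen_ne_sgen: "1 \<le> i \<Longrightarrow> tgen \<noteq> sgen i"
proof
  assume "1 \<le> i" "tgen = sgen i"
  then have "tgen 1 = sgen i 1" by simp
  with \<open>1 \<le> i\<close> show False by (auto simp: tgen_def sgen_def split: if_splits)
qed

lemma sgen_inj: "1 \<le> i \<Longrightarrow> 1 \<le> j \<Longrightarrow> sgen i = sgen j \<Longrightarrow> i = j"
proof -
  assume a: "1 \<le> i" "1 \<le> j" "sgen i = sgen j"
  have "sgen i i = sgen j i" using a(3) by simp
  then show "i = j" using a(1,2) unfolding sgen_def by (auto split: if_splits)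
qed

lemma word_prod_Cons[simp]: "word_prod (s # ws) = s \<circ> word_prod ws"
  by (simp add: word_prod_def)
lemma word_prod_Nil[simp]: "word_prod [] = id"
  by (simp add: word_prod_def)
lemma word_prod_append: "word_prod (ws @ vs) = word_prod ws \<circ> word_prod vs"
  by (induction ws) auto
lemma word_prod_snoc: "word_prod (ws @ [s]) = word_prod ws \<circ> s"
  by (simp add: word_prod_append)

lemma word_prod_Wn: "1 \<le> n \<Longrightarrow> set ws \<subseteq> Sgens n \<Longrightarrow> word_prod ws \<in> Wn n"
proof (induction ws)
  case (Cons a ws)
  then have "a \<in> Wn n" "word_prod ws \<in> Wn n" using Sgens_Wn by auto
  then show ?case by (metis Wn_comp word_prod_Cons)
qed auto



definition tr :: "int \<Rightarrow> int \<Rightarrow> int \<Rightarrow> int" where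
  "tr u v = (\<lambda>j. if j = u then v else if j = v then u else j)"

definition Inv :: "nat \<Rightarrow> (int \<Rightarrow> int) \<Rightarrow> int" where
  "Inv n y = (\<Sum>p\<in>signed_dom n. \<Sum>q\<in>signed_dom n. if p < q \<and> y q < y p then 1 else 0)"

definition Neg :: "nat \<Rightarrow> (int \<Rightarrow> int) \<Rightarrow> int" where
  "Neg n y = (\<Sum>p\<in>{1..int n}. if y p < 0 then 1 else 0)"

definition N2 :: "nat \<Rightarrow> (int \<Rightarrow> int) \<Rightarrow> int" where
  "N2 n y = Inv n y + Neg n y"

lemma tr_tr[simp]: "tr u v (tr u v x) = x"
  by (auto simp: tr_def)

lemma tr_bij: assumes "u \<in> S" "v \<in> S" shows "bij_betw (tr u v) S S"
proof (rule bij_betw_byWitness[where f'="tr u v"])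
  show "tr u v ` S \<subseteq> S" using assms by (auto simp: tr_def)
qed (use assms in \<open>auto simp: tr_def\<close>)

lemma Inv_tr:
  fixes y :: "int \<Rightarrow> int"
  assumes u: "u \<in> signed_dom n" and v: "v \<in> signed_dom n" and uv: "u < v"
    and gap: "\<forall>x\<in>signed_dom n. x \<le> u \<or> v \<le> x"
  shows "Inv n (y \<circ> tr u v) = Inv n y - (if y v < y u then 1 else 0) + (if y u < y v then 1 else 0)"
proof -
  let ?t = "tr u v"
  let ?S = "signed_dom n"
  define G where "G = (\<lambda>(p, q). if p < q \<and> y q < y p then 1 else (0::int))"
  define H where "H = (\<lambda>(p, q). if ?t p < ?t q \<and> y q < y p then 1 else (0::int))"
  have bij: "bij_betw ?t ?S ?S" using tr_bij[OF u v] .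
  have "Inv n (y \<circ> ?t) = (\<Sum>p\<in>?S. \<Sum>q\<in>?S. H (?t p, ?t q))"
    by (simp add: Inv_def H_def)
  also have "\<dots> = (\<Sum>p\<in>?S. \<Sum>q\<in>?S. H (p, q))"
  proof -
    have "(\<Sum>p\<in>?S. \<Sum>q\<in>?S. H (?t p, ?t q)) = (\<Sum>p\<in>?S. \<Sum>q\<in>?S. H (?t p, q))"
      by (intro sum.cong refl sum.reindex_bij_betw[OF bij])
    also have "\<dots> = (\<Sum>p\<in>?S. \<Sum>q\<in>?S. H (p, q))"
      by (rule sum.reindex_bij_betw[OF bij, where g="\<lambda>p. \<Sum>q\<in>?S. H (p, q)"])
    finally show ?thesis .
  qed
  also have "\<dots> = (\<Sum>x\<in>?S \<times> ?S. H x)"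
    by (simp add: sum.cartesian_product)
  also have "\<dots> = (\<Sum>x\<in>?S \<times> ?S. G x) + (\<Sum>x\<in>?S \<times> ?S. H x - G x)"
    by (simp add: sum.distrib[symmetric])
  also have "(\<Sum>x\<in>?S \<times> ?S. H x - G x) = (\<Sum>x\<in>{(u, v), (v, u)}. H x - G x)"
  proof (rule sum.mono_neutral_right)
    show "{(u, v), (v, u)} \<subseteq> ?S \<times> ?S" using u v by auto
    show "\<forall>x\<in>?S \<times> ?S - {(u, v), (v, u)}. H x - G x = 0"
    proof
      fix x assume x: "x \<in> ?S \<times> ?S - {(u, v), (v, u)}"
      obtain p q where pq: "x = (p, q)" by (cases x)
      have "?t p < ?t q \<longleftrightarrow> p < q"
        using x gap[rule_format, of p] gap[rule_format, of q] uv unfolding pq tr_def by auto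
      then show "H x - G x = 0" by (simp add: H_def G_def pq)
    qed
  qed simp
  also have "\<dots> = - (if y v < y u then 1 else 0) + (if y u < y v then 1 else 0)"
    using uv by (simp add: H_def G_def tr_def)
  also have "(\<Sum>x\<in>?S \<times> ?S. G x) = Inv n y"
    by (simp add: Inv_def G_def sum.cartesian_product)
  finally have "Inv n (y \<circ> ?t) = Inv n y + (- (if y v < y u then 1 else 0) + (if y u < y v then 1 else 0))" .
  then show ?thesis by linarith
qed

lemma sgen_tr: "0 < i \<Longrightarrow> sgen i = tr i (i + 1) \<circ> tr (- i - 1) (- i)"
  by (auto simp: sgen_def tr_def fun_eq_iff)

lemma tgen_tr: "tgen = tr (- 1) 1"
  by (auto simp: tgen_def tr_def fun_eq_iff)

lemma Inv_sgen:
  assumes y: "y \<in> Wn n" and i: "1 \<le> i" "i \<le> int n - 1"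
  shows "Inv n (y \<circ> sgen i) = Inv n y - 2 * (if y (i + 1) < y i then 1 else 0) + 2 * (if y i < y (i + 1) then 1 else 0)"
proof -
  have D1: "i \<in> signed_dom n" "i + 1 \<in> signed_dom n" "- i - 1 \<in> signed_dom n" "- i \<in> signed_dom n"
    using i by (auto simp: in_D)
  have "y \<circ> sgen i = (y \<circ> tr i (i + 1)) \<circ> tr (- i - 1) (- i)"
    using i by (simp add: sgen_tr comp_assoc)
  have gap2: "\<forall>x\<in>signed_dom n. x \<le> - i - 1 \<or> - i \<le> x" by auto
  have e1: "(y \<circ> tr i (i + 1)) (- i) = y (- i)" "(y \<circ> tr i (i + 1)) (- i - 1) = y (- i - 1)"
    using i by (auto simp: tr_def)
  have A: "Inv n ((y \<circ> tr i (i + 1)) \<circ> tr (- i - 1) (- i)) = Inv n (y \<circ> tr i (i + 1))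
     - (if (y \<circ> tr i (i + 1)) (- i) < (y \<circ> tr i (i + 1)) (- i - 1) then 1 else 0)
     + (if (y \<circ> tr i (i + 1)) (- i - 1) < (y \<circ> tr i (i + 1)) (- i) then 1 else 0)"
    by (rule Inv_tr[OF D1(3) D1(4) _ gap2]) simp
  have h1: "Inv n (y \<circ> sgen i) = Inv n (y \<circ> tr i (i + 1)) - (if y (- i) < y (- i - 1) then 1 else 0) + (if y (- i - 1) < y (- i) then 1 else 0)"
    using A unfolding e1 \<open>y \<circ> sgen i = _\<close>[symmetric] .
  have h2: "Inv n (y \<circ> tr i (i + 1)) = Inv n y - (if y (i + 1) < y i then 1 else 0) + (if y i < y (i + 1) then 1 else 0)"
    by (rule Inv_tr[OF D1(1) D1(2)]) auto
  have e2: "y (- i) = - y i" "y (- i - 1) = - y (i + 1)"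
  proof -
    have "- i - 1 = - (i + 1)" by simp
    then show "y (- i) = - y i" "y (- i - 1) = - y (i + 1)"
      using Wn_odd[OF y, of i] Wn_odd[OF y, of "i + 1"] by simp_all
  qed
  have h3: "(if y (- i) < y (- i - 1) then 1 else 0::int) = (if y (i + 1) < y i then 1 else 0)"
    unfolding e2 by simp
  have h4: "(if y (- i - 1) < y (- i) then 1 else 0::int) = (if y i < y (i + 1) then 1 else 0)"
    unfolding e2 by simp
  show ?thesis using h1 h2 h3 h4 by linarith
qed

lemma Neg_sgen:
  assumes i: "1 \<le> i" "i \<le> int n - 1"
  shows "Neg n (y \<circ> sgen i) = Neg n y"
proof -
  have "bij_betw (sgen i) {1..int n} {1..int n}"
    by (rule bij_betw_byWitness[where f'="sgen i"]) (use i in \<open>auto simp: sgen_def\<close>)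
  then show ?thesis unfolding Neg_def comp_def
    by (rule sum.reindex_bij_betw)
qed

lemma Inv_tgen:
  assumes n: "1 \<le> n"
  shows "Inv n (y \<circ> tgen) = Inv n y - (if y 1 < y (- 1) then 1 else 0) + (if y (- 1) < y 1 then 1 else 0)"
proof -
  have D1: "- 1 \<in> signed_dom n" "1 \<in> signed_dom n" using n by (auto simp: in_D)
  have gap: "\<forall>x\<in>signed_dom n. x \<le> - 1 \<or> 1 \<le> x" by (auto simp: in_D)
  show ?thesis using Inv_tr[OF D1 _ gap, of y] by (simp add: tgen_tr)
qed

lemma Neg_tgen:
  assumes n: "1 \<le> n"
  shows "Neg n (y \<circ> tgen) = Neg n y - (if y 1 < 0 then 1 else 0) + (if y (- 1) < 0 then 1 else 0)"
proof -
  have S: "{1..int n} = insert 1 {2..int n}" using n by auto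
  have "(\<Sum>p\<in>{2..int n}. if (y \<circ> tgen) p < 0 then 1 else (0::int)) = (\<Sum>p\<in>{2..int n}. if y p < 0 then 1 else 0)"
    by (intro sum.cong) (auto simp: tgen_def)
  then show ?thesis unfolding Neg_def S by (simp add: tgen_def)
qed

lemma N2_sgen:
  assumes y: "y \<in> Wn n" and i: "1 \<le> i" "i \<le> int n - 1"
  shows "N2 n (y \<circ> sgen i) = N2 n y + (if y i < y (i + 1) then 2 else - 2)"
proof -
  have "y i \<noteq> y (i + 1)"
    using Wn_inj[OF y, of i "i + 1"] i by (auto simp: in_D)
  then show ?thesis using Inv_sgen[OF y i] Neg_sgen[OF i, of y] by (auto simp: N2_def)
qed

lemma N2_tgen:
  assumes y: "y \<in> Wn n" and n: "1 \<le> n"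
  shows "N2 n (y \<circ> tgen) = N2 n y + (if 0 < y 1 then 2 else - 2)"
proof -
  have "y 1 \<noteq> 0" using Wn_D[OF y, of 1] n by (auto simp: in_D)
  moreover have "y (- 1) = - y 1" using Wn_odd[OF y] by simp
  ultimately show ?thesis using Inv_tgen[OF n, of y] Neg_tgen[OF n, of y] by (auto simp: N2_def)
qed

lemma N2_nonneg: "0 \<le> N2 n y"
  unfolding N2_def Inv_def Neg_def by (intro add_nonneg_nonneg sum_nonneg) auto

lemma N2_id[simp]: "N2 n id = 0"
proof -
  have "Inv n id = 0" unfolding Inv_def by (intro sum.neutral ballI) auto
  then show ?thesis unfolding N2_def Neg_def by simp
qed

lemma no_descent_id:
  assumes y: "y \<in> Wn n" and t: "0 < y 1" and s: "\<And>i. 1 \<le> i \<Longrightarrow> i \<le> int n - 1 \<Longrightarrow> y i < y (i + 1)"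
  shows "y = id"
proof -
  have up: "k \<le> int n \<longrightarrow> k \<le> y k" if "1 \<le> k" for k
    using that
  proof (induction k rule: int_ge_induct)
    case base then show ?case using t by simp
  next
    case (step i)
    then show ?case using s[of i] by auto
  qed
  have dn: "1 \<le> k \<longrightarrow> y k \<le> k" if "k \<le> int n" for k
    using that
  proof (induction k rule: int_le_induct)
    case base
    then show ?case using Wn_D[OF y, of "int n"] by (auto simp: in_D)
  next
    case (step i)
    then show ?case using s[of "i - 1"] by auto
  qed
  have pos: "y k = k" if "1 \<le> k" "k \<le> int n" for k
    using up[OF that(1)] dn[OF that(2)] that by auto
  show ?thesis
  proof
    fix x
    show "y x = id x"
    proof (cases "x \<in> signed_dom n")
      case True
      then show ?thesis
      proof (cases "0 < x")
        case True
        then show ?thesis using pos[of x] \<open>x \<in> signed_dom n\<close> by (auto simp: in_D)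
      next
        case False
        then have "y (- x) = - x" using pos[of "- x"] \<open>x \<in> signed_dom n\<close> by (auto simp: in_D)
        then show ?thesis using Wn_odd[OF y, of "- x"] by simp
      qed
    next
      case False
      then show ?thesis using Wn_out[OF y] by simp
    qed
  qed
qed



lemma N2_step_le: "1 \<le> n \<Longrightarrow> y \<in> Wn n \<Longrightarrow> s \<in> Sgens n \<Longrightarrow> N2 n (y \<circ> s) \<le> N2 n y + 2"
  by (auto elim!: Sgens_cases simp: N2_sgen N2_tgen)

lemma N2_word: "1 \<le> n \<Longrightarrow> set ws \<subseteq> Sgens n \<Longrightarrow> N2 n (word_prod ws) \<le> 2 * int (length ws)"
proof (induction ws rule: rev_induct)
  case (snoc s ws)
  then have "word_prod ws \<in> Wn n" by (auto intro: word_prod_Wn)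
  then have "N2 n (word_prod (ws @ [s])) \<le> N2 n (word_prod ws) + 2"
    using snoc N2_step_le[of n "word_prod ws" s] by (simp only: word_prod_snoc) simp
  then show ?case using snoc by simp
qed simp

lemma descent_exists:
  assumes n: "1 \<le> n" and y: "y \<in> Wn n" and ne: "y \<noteq> id"
  shows "\<exists>s\<in>Sgens n. N2 n (y \<circ> s) = N2 n y - 2"
proof (rule ccontr)
  assume nd: "\<not> ?thesis"
  have "0 < y 1"
  proof (rule ccontr)
    assume "\<not> 0 < y 1"
    then have "N2 n (y \<circ> tgen) = N2 n y - 2" using N2_tgen[OF y n] by simp
    then show False using nd by (auto simp: Sgens_def)
  qed
  moreover have "y i < y (i + 1)" if "1 \<le> i" "i \<le> int n - 1" for i
  proof (rule ccontr)
    assume "\<not> y i < y (i + 1)"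
    then have "N2 n (y \<circ> sgen i) = N2 n y - 2" using N2_sgen[OF y that] by simp
    then show False using nd that by (auto simp: Sgens_def)
  qed
  ultimately have "y = id" using no_descent_id[OF y] by blast
  with ne show False by simp
qed

lemma exists_word_aux:
  assumes n: "1 \<le> n"
  shows "\<forall>y\<in>Wn n. nat (N2 n y) = k \<longrightarrow> (\<exists>ws. set ws \<subseteq> Sgens n \<and> word_prod ws = y \<and> 2 * int (length ws) = N2 n y)"
proof (induction k rule: less_induct)
  case (less k)
  show ?case
  proof (intro ballI impI)
    fix y assume y: "y \<in> Wn n" and k: "nat (N2 n y) = k"
    show "\<exists>ws. set ws \<subseteq> Sgens n \<and> word_prod ws = y \<and> 2 * int (length ws) = N2 n y"
    proof (cases "y = id")
      case True
      then show ?thesis by (intro exI[of _ "[]"]) simp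
    next
      case False
      obtain s where s: "s \<in> Sgens n" "N2 n (y \<circ> s) = N2 n y - 2"
        using descent_exists[OF n y False] by blast
      have ys: "y \<circ> s \<in> Wn n" using Wn_comp[OF y Sgens_Wn[OF n s(1)]] .
      have "nat (N2 n (y \<circ> s)) < k" using s(2) k N2_nonneg[of n "y \<circ> s"] by linarith
      then obtain ws where ws: "set ws \<subseteq> Sgens n" "word_prod ws = y \<circ> s" "2 * int (length ws) = N2 n (y \<circ> s)"
        using less.IH ys by blast
      have "word_prod (ws @ [s]) = y"
        using ws(2) Sgens_invol[OF s(1)] by (simp add: word_prod_snoc comp_assoc)
      then show ?thesis using ws s by (intro exI[of _ "ws @ [s]"]) auto
    qed
  qed
qed

lemma exists_word:
  "1 \<le> n \<Longrightarrow> y \<in> Wn n \<Longrightarrow> \<exists>ws. set ws \<subseteq> Sgens n \<and> word_prod ws = y \<and> 2 * int (length ws) = N2 n y"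
  using exists_word_aux by blast

lemma clen_le: "set ws \<subseteq> Sgens n \<Longrightarrow> word_prod ws = y \<Longrightarrow> clen n y \<le> length ws"
  unfolding clen_def by (rule Least_le) blast

lemma clen_word:
  assumes "1 \<le> n" "y \<in> Wn n"
  shows "\<exists>ws. length ws = clen n y \<and> set ws \<subseteq> Sgens n \<and> word_prod ws = y"
proof -
  obtain ws where "set ws \<subseteq> Sgens n" "word_prod ws = y" using exists_word[OF assms] by blast
  then have "\<exists>k ws. length ws = k \<and> set ws \<subseteq> Sgens n \<and> word_prod ws = y" by blast
  then show ?thesis unfolding clen_def by (rule LeastI_ex)
qed

lemma clen_N2:
  assumes n: "1 \<le> n" and y: "y \<in> Wn n"
  shows "2 * int (clen n y) = N2 n y"
proof -
  obtain ws where ws: "set ws \<subseteq> Sgens n" "word_prod ws = y" "2 * int (length ws) = N2 n y"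
    using exists_word[OF n y] by blast
  have "clen n y \<le> length ws" using clen_le[OF ws(1,2)] .
  moreover obtain vs where vs: "length vs = clen n y" "set vs \<subseteq> Sgens n" "word_prod vs = y"
    using clen_word[OF n y] by blast
  have "N2 n y \<le> 2 * int (clen n y)" using N2_word[OF n vs(2)] vs by simp
  ultimately show ?thesis using ws(3) by linarith
qed

lemma clen_sgen:
  assumes n: "1 \<le> n" and y: "y \<in> Wn n" and i: "1 \<le> i" "i \<le> int n - 1"
  shows "int (clen n (y \<circ> sgen i)) = int (clen n y) + (if y i < y (i + 1) then 1 else - 1)"
proof -
  have "y \<circ> sgen i \<in> Wn n" using Wn_comp[OF y sgen_Wn[OF i]] .
  then show ?thesis using clen_N2[OF n y] clen_N2[OF n, of "y \<circ> sgen i"] N2_sgen[OF y i] by auto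
qed

lemma clen_tgen:
  assumes n: "1 \<le> n" and y: "y \<in> Wn n"
  shows "int (clen n (y \<circ> tgen)) = int (clen n y) + (if 0 < y 1 then 1 else - 1)"
proof -
  have "y \<circ> tgen \<in> Wn n" using Wn_comp[OF y tgen_Wn[OF n]] .
  then show ?thesis using clen_N2[OF n y] clen_N2[OF n, of "y \<circ> tgen"] N2_tgen[OF y n] by auto
qed

lemma clen_gen:
  assumes n: "1 \<le> n" and y: "y \<in> Wn n" and s: "s \<in> Sgens n"
  shows "clen n (y \<circ> s) = clen n y + 1 \<or> clen n y = clen n (y \<circ> s) + 1"
  using s
proof (cases rule: Sgens_cases)
  case 1
  then show ?thesis using clen_tgen[OF n y] by (auto split: if_splits)
next
  case (2 i)
  then show ?thesis using clen_sgen[OF n y 2(1,2)] by (auto split: if_splits)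
qed

lemma clen_id[simp]: "clen n id = 0"
  using clen_le[of "[]" n id] by simp

lemma clen_zero: assumes "1 \<le> n" "y \<in> Wn n" "clen n y = 0" shows "y = id"
  using clen_word[OF assms(1,2)] assms(3) by auto

lemma word_prod_rev:
  assumes "set ws \<subseteq> Sgens n"
  shows "word_prod (rev ws) (word_prod ws x) = x \<and> word_prod ws (word_prod (rev ws) x) = x"
  using assms
proof (induction ws arbitrary: x)
  case (Cons s ws)
  then have s: "s \<in> Sgens n" and ws: "set ws \<subseteq> Sgens n" by auto
  then show ?case using Cons.IH[OF ws] by (simp add: word_prod_append Sgens_invol'[OF s])
qed simp

lemma inv_word_prod:
  assumes "set ws \<subseteq> Sgens n" shows "inv (word_prod ws) = word_prod (rev ws)"
  by (rule inv_unique_comp) (use word_prod_rev[OF assms] in \<open>auto simp: fun_eq_iff\<close>)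

lemma clen_inv_le:
  assumes n: "1 \<le> n" and y: "y \<in> Wn n" shows "clen n (inv y) \<le> clen n y"
proof -
  obtain ws where ws: "length ws = clen n y" "set ws \<subseteq> Sgens n" "word_prod ws = y"
    using clen_word[OF n y] by blast
  have "word_prod (rev ws) = inv y" using inv_word_prod[OF ws(2)] ws(3) by simp
  then show ?thesis using clen_le[of "rev ws" n "inv y"] ws by simp
qed

lemma clen_inv:
  assumes n: "1 \<le> n" and y: "y \<in> Wn n" shows "clen n (inv y) = clen n y"
proof -
  have "clen n (inv (inv y)) \<le> clen n (inv y)" using clen_inv_le[OF n Wn_inv[OF y]] .
  moreover have "inv (inv y) = y" using Wn_bij[OF y] by (simp add: inv_inv_eq)
  ultimately show ?thesis using clen_inv_le[OF n y] by simp
qed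



lemma sgen_odd: "0 < k \<Longrightarrow> sgen k (- v) = - sgen k v"
  by (auto simp: sgen_def)
lemma tgen_odd: "tgen (- v) = - tgen v"
  by (auto simp: tgen_def)

lemma sgen_neq_neg: "1 \<le> k \<Longrightarrow> v \<noteq> 0 \<Longrightarrow> sgen k v \<noteq> - v"
  unfolding sgen_def by (cases "v = k"; cases "v = k + 1"; cases "v = - k"; cases "v = - k - 1") auto
lemma tgen_mv: "u \<noteq> v \<Longrightarrow> u \<noteq> - v \<Longrightarrow> tgen u \<noteq> v"
  unfolding tgen_def by auto

lemma Wn_inj_univ: "y \<in> Wn n \<Longrightarrow> y a = y b \<Longrightarrow> a = b"
  using Wn_bij by (metis bij_def injD)

lemma desc_tgen:
  assumes n: "1 \<le> n" and y: "y \<in> Wn n"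
  shows "clen n (y \<circ> tgen) < clen n y \<longleftrightarrow> y 1 < 0"
  using clen_tgen[OF n y] Wn_D[OF y, of 1] n by (auto simp: in_D split: if_splits)

lemma desc_sgen:
  assumes n: "1 \<le> n" and y: "y \<in> Wn n" and i: "1 \<le> i" "i \<le> int n - 1"
  shows "clen n (y \<circ> sgen i) < clen n y \<longleftrightarrow> y (i + 1) < y i"
proof -
  have "y i \<noteq> y (i + 1)" using Wn_inj_univ[OF y, of i "i + 1"] by auto
  then show ?thesis using clen_sgen[OF n y i] by (auto split: if_splits)
qed

lemma sgen_comm:
  assumes y: "y \<in> Wn n" and k: "1 \<le> k" and j: "1 \<le> j"
    and u: "y j \<in> {k, k + 1, - k, - k - 1}" and v: "y (j + 1) = sgen k (y j)"
  shows "sgen k \<circ> y = y \<circ> sgen j"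
proof
  fix x
  let ?u = "y j"
  have o1: "y (- j) = - ?u" using Wn_odd[OF y] by simp
  have "- j - 1 = - (j + 1)" by simp
  then have o2: "y (- j - 1) = - y (j + 1)" using Wn_odd[OF y, of "j + 1"] by simp
  have kk: "0 < k" using k by simp
  have S: "{k, k + 1, - k, - k - 1} = {y j, y (j + 1), y (- j), y (- j - 1)}"
    using u unfolding v o1 o2 by (auto simp: sgen_def)
  show "(sgen k \<circ> y) x = (y \<circ> sgen j) x"
  proof (cases "x \<in> {j, j + 1, - j, - j - 1}")
    case True
    then show ?thesis using j o1 o2 v sgen_odd[OF kk] sgen_invol'[OF kk]
      by (auto simp: sgen_def[of j])
  next
    case False
    have "y x \<notin> {k, k + 1, - k, - k - 1}"
      unfolding S using False Wn_inj_univ[OF y] by blast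
    then have "sgen k (y x) = y x" by (auto simp: sgen_def)
    moreover have "sgen j x = x" using False by (auto simp: sgen_def)
    ultimately show ?thesis by simp
  qed
qed

lemma tgen_comm:
  assumes y: "y \<in> Wn n" and u: "y 1 = 1 \<or> y 1 = - 1"
  shows "tgen \<circ> y = y \<circ> tgen"
proof
  fix x
  have o1: "y (- 1) = - y 1" using Wn_odd[OF y] by simp
  show "(tgen \<circ> y) x = (y \<circ> tgen) x"
  proof (cases "x = 1 \<or> x = - 1")
    case True
    then show ?thesis using u o1 by (auto simp: tgen_def)
  next
    case False
    have "y x \<noteq> 1 \<and> y x \<noteq> - 1" using False u o1 Wn_inj_univ[OF y, of x 1] Wn_inj_univ[OF y, of x "- 1"] by auto
    then show ?thesis using False by (auto simp: tgen_def)
  qed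
qed

lemma sgen_pos: "0 < k \<Longrightarrow> 0 < sgen k v \<longleftrightarrow> 0 < v"
  by (auto simp: sgen_def)
lemma sgen_neg: "0 < k \<Longrightarrow> sgen k v < 0 \<longleftrightarrow> v < 0"
  by (auto simp: sgen_def)

lemma sgen_order:
  assumes k: "1 \<le> k" and uv: "u \<noteq> v"
    and not: "\<not> (u \<in> {k, k + 1, - k, - k - 1} \<and> v = sgen k u)"
  shows "sgen k v < sgen k u \<longleftrightarrow> v < u"
  using k uv not by (auto simp: sgen_def)

lemma tgen_order:
  assumes "u \<noteq> v" "u \<noteq> - v" "u \<noteq> 0" "v \<noteq> 0"
  shows "tgen v < tgen u \<longleftrightarrow> v < u"
  using assms by (auto simp: tgen_def)

lemma L3:
  assumes n: "1 \<le> n" and y: "y \<in> Wn n" and s: "s \<in> Sgens n" and t: "t \<in> Sgens n"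
    and ne: "s \<circ> y \<noteq> y \<circ> t"
  shows "clen n (s \<circ> y \<circ> t) < clen n (s \<circ> y) \<longleftrightarrow> clen n (y \<circ> t) < clen n y"
proof -
  have sy: "s \<circ> y \<in> Wn n" using Wn_comp[OF Sgens_Wn[OF n s] y] .
  have y1: "y 1 \<noteq> 0" using Wn_D[OF y, of 1] n by (auto simp: in_D)
  show ?thesis
  using t
  proof (cases rule: Sgens_cases)
    case 1
    have "(s \<circ> y) 1 < 0 \<longleftrightarrow> y 1 < 0"
      using s
    proof (cases rule: Sgens_cases)
      case 1
      then have "\<not> (y 1 = 1 \<or> y 1 = - 1)" using ne \<open>t = tgen\<close> tgen_comm[OF y] by auto
      then show ?thesis using \<open>s = tgen\<close> by (auto simp: tgen_def)
    next
      case (2 k)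
      then show ?thesis using sgen_neg[of k "y 1"] by simp
    qed
    then show ?thesis using desc_tgen[OF n y] desc_tgen[OF n sy] \<open>t = tgen\<close> by simp
  next
    case (2 j)
    have yj: "y j \<noteq> y (j + 1)" "y j \<noteq> - y (j + 1)" "y j \<noteq> 0" "y (j + 1) \<noteq> 0"
    proof -
      show "y j \<noteq> y (j + 1)" using Wn_inj_univ[OF y, of j "j + 1"] by auto
      show "y j \<noteq> - y (j + 1)" using Wn_inj_univ[OF y, of j "- (j + 1)"] Wn_odd[OF y, of "j + 1"] 2 by auto
      show "y j \<noteq> 0" using Wn_D[OF y, of j] 2 by (auto simp: in_D)
      show "y (j + 1) \<noteq> 0" using Wn_D[OF y, of "j + 1"] 2 by (auto simp: in_D)
    qed
    have "(s \<circ> y) (j + 1) < (s \<circ> y) j \<longleftrightarrow> y (j + 1) < y j"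
      using s
    proof (cases rule: Sgens_cases)
      case 1
      then show ?thesis using tgen_order[of "y j" "y (j + 1)"] yj by auto
    next
      case (2 k)
      have "\<not> (y j \<in> {k, k + 1, - k, - k - 1} \<and> y (j + 1) = sgen k (y j))"
        using sgen_comm[OF y 2(1) \<open>1 \<le> j\<close>] ne \<open>s = sgen k\<close> \<open>t = sgen j\<close> by blast
      then show ?thesis using sgen_order[OF 2(1) yj(1)] \<open>s = sgen k\<close> by simp
    qed
    then show ?thesis using desc_sgen[OF n y 2(1,2)] desc_sgen[OF n sy 2(1,2)] \<open>t = sgen j\<close> by simp
  qed
qed

lemma inv_gen: "s \<in> Sgens n \<Longrightarrow> inv s = s"
  by (rule inv_unique_comp) (auto simp: Sgens_invol)

lemma L3':
  assumes n: "1 \<le> n" and y: "y \<in> Wn n" and s: "s \<in> Sgens n" and t: "t \<in> Sgens n"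
    and ne: "s \<circ> y \<noteq> y \<circ> t"
  shows "clen n (s \<circ> y) < clen n y \<longleftrightarrow> clen n (s \<circ> y \<circ> t) < clen n (y \<circ> t)"
proof -
  let ?z = "inv y"
  have z: "?z \<in> Wn n" using Wn_inv[OF y] .
  have bs: "bij s" "bij t" "bij y" using Sgens_Wn[OF n s] Sgens_Wn[OF n t] Wn_bij y by (auto intro: Wn_bij)
  have i1: "inv (s \<circ> y) = ?z \<circ> s" using o_inv_distrib[OF bs(1) bs(3)] inv_gen[OF s] by simp
  have i2: "inv (s \<circ> y \<circ> t) = t \<circ> ?z \<circ> s"
    using o_inv_distrib[OF bij_comp[OF bs(3) bs(1)] bs(2)] o_inv_distrib[OF bs(1) bs(3)] inv_gen[OF s] inv_gen[OF t]
    by (simp add: comp_assoc)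
  have i3: "inv (y \<circ> t) = t \<circ> ?z" using o_inv_distrib[OF bs(3) bs(2)] inv_gen[OF t] by simp
  have yz: "y \<circ> ?z = id" "?z \<circ> y = id"
    using bs(3) by (metis bij_is_surj surj_iff, metis bij_is_inj inj_iff)
  have ne': "t \<circ> ?z \<noteq> ?z \<circ> s"
  proof
    assume "t \<circ> ?z = ?z \<circ> s"
    then have "y \<circ> (t \<circ> ?z) \<circ> y = y \<circ> (?z \<circ> s) \<circ> y" by simp
    moreover have "y \<circ> (t \<circ> ?z) \<circ> y = y \<circ> t \<circ> (?z \<circ> y)" by (simp add: comp_assoc)
    moreover have "y \<circ> (?z \<circ> s) \<circ> y = (y \<circ> ?z) \<circ> s \<circ> y" by (simp add: comp_assoc)
    ultimately have "y \<circ> t = s \<circ> y" using yz by simp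
    with ne show False by simp
  qed
  have sy: "s \<circ> y \<in> Wn n" "s \<circ> y \<circ> t \<in> Wn n" "y \<circ> t \<in> Wn n"
    using Wn_comp Sgens_Wn[OF n s] Sgens_Wn[OF n t] y by blast+
  have "clen n (s \<circ> y) = clen n (?z \<circ> s)" using clen_inv[OF n sy(1)] i1 by simp
  moreover have "clen n y = clen n ?z" using clen_inv[OF n y] by simp
  moreover have "clen n (s \<circ> y \<circ> t) = clen n (t \<circ> ?z \<circ> s)" using clen_inv[OF n sy(2)] i2 by simp
  moreover have "clen n (y \<circ> t) = clen n (t \<circ> ?z)" using clen_inv[OF n sy(3)] i3 by simp
  ultimately show ?thesis using L3[OF n z t s ne'] by simp
qed

lemma same_kind:
  assumes n: "1 \<le> n" and y: "y \<in> Wn n" and s: "s \<in> Sgens n" and t: "t \<in> Sgens n"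
    and eq: "s \<circ> y = y \<circ> t"
  shows "s = tgen \<longleftrightarrow> t = tgen"
proof -
  have y1: "y 1 \<noteq> 0" using Wn_D[OF y, of 1] n by (auto simp: in_D)
  show ?thesis
    using s
  proof (cases rule: Sgens_cases)
    case 1
    show ?thesis using t
    proof (cases rule: Sgens_cases)
      case (2 j)
      have "tgen (y j) = y (j + 1)" using fun_cong[OF eq, of j] 1 2 by (simp add: sgen_def)
      moreover have "y j \<noteq> y (j + 1)" "y j \<noteq> - y (j + 1)"
        using Wn_inj_univ[OF y, of j "j + 1"] Wn_inj_univ[OF y, of j "- (j + 1)"] Wn_odd[OF y, of "j + 1"] 2 by auto
      ultimately have False using tgen_mv by blast
      then show ?thesis ..
    qed (use 1 in simp)
  next
    case (2 k)
    show ?thesis using t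
    proof (cases rule: Sgens_cases)
      case 1
      have "sgen k (y 1) = y (- 1)" using fun_cong[OF eq, of 1] 1 2 by (simp add: tgen_def)
      then have "sgen k (y 1) = - y 1" using Wn_odd[OF y, of 1] by simp
      then have False using y1 2 sgen_neq_neg by blast
      then show ?thesis ..
    next
      case (2 j)
      then show ?thesis using \<open>s = sgen k\<close> \<open>1 \<le> k\<close> tgen_ne_sgen by metis
    qed
  qed
qed



definition suppW :: "nat \<Rightarrow> ((int \<Rightarrow> int) \<Rightarrow> 'b::zero) \<Rightarrow> bool" where
  "suppW n m \<longleftrightarrow> (\<forall>y. y \<notin> Wn n \<longrightarrow> m y = 0)"

definition cpar :: "'g::linordered_ab_group_add \<Rightarrow> 'g \<Rightarrow> (int \<Rightarrow> int) \<Rightarrow> 'g grpring" where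
  "cpar a b s = vpar a b s - vinv a b s"

definition lmulT :: "nat \<Rightarrow> 'g::linordered_ab_group_add \<Rightarrow> 'g \<Rightarrow> (int \<Rightarrow> int) \<Rightarrow> 'g hmod \<Rightarrow> 'g hmod" where
  "lmulT n a b s m = (\<lambda>y. m (s \<circ> y) + (if clen n (s \<circ> y) < clen n y then cpar a b s * m y else 0))"

lemma rmulT_eq: "rmulT n a b s m y = m (y \<circ> s) + (if clen n (y \<circ> s) < clen n y then cpar a b s * m y else 0)"
  by (simp add: rmulT_def cpar_def)
lemma rmulTinv_eq: "rmulTinv n a b s m y = rmulT n a b s m y - cpar a b s * m y"
  by (simp add: rmulTinv_def cpar_def)

lemma barA_cpar: "barA (cpar a b s) = - cpar a b s"
  by (simp add: cpar_def vpar_def vinv_def barA_diff barA_expo)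
lemma barA_vinv: "barA (vinv a b s) = vpar a b s"
  by (simp add: vpar_def vinv_def barA_expo)

lemma Wn_not_comp_r: "1 \<le> n \<Longrightarrow> s \<in> Sgens n \<Longrightarrow> y \<notin> Wn n \<Longrightarrow> y \<circ> s \<notin> Wn n"
proof
  assume "1 \<le> n" "s \<in> Sgens n" "y \<notin> Wn n" "y \<circ> s \<in> Wn n"
  then have "(y \<circ> s) \<circ> s \<in> Wn n" using Wn_comp Sgens_Wn by blast
  then show False using \<open>y \<notin> Wn n\<close> Sgens_invol[OF \<open>s \<in> Sgens n\<close>] by (simp add: comp_assoc)
qed
lemma Wn_not_comp_l: "1 \<le> n \<Longrightarrow> s \<in> Sgens n \<Longrightarrow> y \<notin> Wn n \<Longrightarrow> s \<circ> y \<notin> Wn n"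
proof
  assume "1 \<le> n" "s \<in> Sgens n" "y \<notin> Wn n" "s \<circ> y \<in> Wn n"
  then have "s \<circ> (s \<circ> y) \<in> Wn n" using Wn_comp Sgens_Wn by blast
  then show False using \<open>y \<notin> Wn n\<close> Sgens_invol[OF \<open>s \<in> Sgens n\<close>] by (simp add: comp_assoc[symmetric])
qed
lemma Wn_comp_r: "1 \<le> n \<Longrightarrow> s \<in> Sgens n \<Longrightarrow> y \<in> Wn n \<Longrightarrow> y \<circ> s \<in> Wn n"
  using Wn_comp Sgens_Wn by blast
lemma Wn_comp_l: "1 \<le> n \<Longrightarrow> s \<in> Sgens n \<Longrightarrow> y \<in> Wn n \<Longrightarrow> s \<circ> y \<in> Wn n"
  using Wn_comp Sgens_Wn by blast




definition Qw :: "nat \<Rightarrow> 'g::linordered_ab_group_add \<Rightarrow> 'g \<Rightarrow> (int \<Rightarrow> int) list \<Rightarrow> 'g hmod \<Rightarrow> 'g hmod" where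
  "Qw n a b ws = foldr (\<lambda>s g. rmulT n a b s \<circ> g) ws id"

definition Lw :: "nat \<Rightarrow> 'g::linordered_ab_group_add \<Rightarrow> 'g \<Rightarrow> (int \<Rightarrow> int) list \<Rightarrow> 'g hmod \<Rightarrow> 'g hmod" where
  "Lw n a b ws = foldr (\<lambda>s g. lmulT n a b s \<circ> g) ws id"

lemma Qw_Nil[simp]: "Qw n a b [] m = m" by (simp add: Qw_def)
lemma Qw_Cons[simp]: "Qw n a b (s # ws) m = rmulT n a b s (Qw n a b ws m)" by (simp add: Qw_def)
lemma Lw_Nil[simp]: "Lw n a b [] m = m" by (simp add: Lw_def)
lemma Lw_Cons[simp]: "Lw n a b (s # ws) m = lmulT n a b s (Lw n a b ws m)" by (simp add: Lw_def)

lemma finite_Wn: "finite (Wn n)"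
proof -
  let ?S = "signed_dom n"
  have "Wn n \<subseteq> (\<lambda>f x. if x \<in> ?S then f x else x) ` (?S \<rightarrow>\<^sub>E ?S)"
  proof
    fix y assume y: "y \<in> Wn n"
    have "restrict y ?S \<in> ?S \<rightarrow>\<^sub>E ?S" using Wn_D[OF y] by auto
    moreover have "y = (\<lambda>x. if x \<in> ?S then restrict y ?S x else x)"
      using Wn_out[OF y] by (auto simp: fun_eq_iff)
    ultimately show "y \<in> (\<lambda>f x. if x \<in> ?S then f x else x) ` (?S \<rightarrow>\<^sub>E ?S)" by blast
  qed
  moreover have "finite (?S \<rightarrow>\<^sub>E ?S)" by (rule finite_PiE) auto
  ultimately show ?thesis by (meson finite_imageI finite_subset)
qed

lemma suppW_expand: "suppW n m \<Longrightarrow> m = (\<lambda>z. \<Sum>x\<in>Wn n. m x * Tb x z)"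
proof
  fix z assume m: "suppW n m"
  show "m z = (\<Sum>x\<in>Wn n. m x * Tb x z)"
  proof (cases "z \<in> Wn n")
    case True
    then show ?thesis by (simp add: Tb_def if_distrib sum.delta sum.delta' finite_Wn cong: if_cong)
  next
    case False
    have "(\<Sum>x\<in>Wn n. m x * Tb x z) = 0" by (rule sum.neutral) (use False in \<open>auto simp: Tb_def\<close>)
    then show ?thesis using m False by (simp add: suppW_def)
  qed
qed

lemma suppW_Tb: "x \<in> Wn n \<Longrightarrow> suppW n (Tb x)"
  by (auto simp: suppW_def Tb_def)

lemma reduced_tail:
  assumes n: "1 \<le> n" and ws: "set (s # ws) \<subseteq> Sgens n" and r: "length (s # ws) = clen n (word_prod (s # ws))"
  shows "length ws = clen n (word_prod ws)"
proof -
  have wsW: "word_prod ws \<in> Wn n" using word_prod_Wn[OF n] ws by auto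
  obtain vs where vs: "length vs = clen n (word_prod ws)" "set vs \<subseteq> Sgens n" "word_prod vs = word_prod ws"
    using clen_word[OF n wsW] by blast
  have "clen n (word_prod (s # ws)) \<le> length (s # vs)"
    by (rule clen_le) (use vs ws in auto)
  moreover have "clen n (word_prod ws) \<le> length ws" by (rule clen_le) (use ws in auto)
  ultimately show ?thesis using r vs by simp
qed

lemma reduced_butlast:
  assumes n: "1 \<le> n" and ws: "set (ws @ [s]) \<subseteq> Sgens n" and r: "length (ws @ [s]) = clen n (word_prod (ws @ [s]))"
  shows "length ws = clen n (word_prod ws)"
proof -
  have wsW: "word_prod ws \<in> Wn n" using word_prod_Wn[OF n] ws by auto
  obtain vs where vs: "length vs = clen n (word_prod ws)" "set vs \<subseteq> Sgens n" "word_prod vs = word_prod ws"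
    using clen_word[OF n wsW] by blast
  have "clen n (word_prod (ws @ [s])) \<le> length (vs @ [s])"
    by (rule clen_le) (use vs ws in \<open>auto simp: word_prod_snoc\<close>)
  moreover have "clen n (word_prod ws) \<le> length ws" by (rule clen_le) (use ws in auto)
  ultimately show ?thesis using r vs by simp
qed




definition hC :: "nat \<Rightarrow> 'g::linordered_ab_group_add \<Rightarrow> 'g \<Rightarrow> (int \<Rightarrow> int) \<Rightarrow> 'g hmod \<Rightarrow> 'g hmod" where
  "hC n a b s m = (\<lambda>y. rmulT n a b s m y + vinv a b s * m y)"

lemma barH_lin: "barH n a b (\<lambda>z. \<Sum>i\<in>S. f i * g i z) = (\<lambda>z. \<Sum>i\<in>S. barA (f i) * barH n a b (g i) z)"
proof
  fix y
  have "barH n a b (\<lambda>z. \<Sum>i\<in>S. f i * g i z) y = (\<Sum>w\<in>Wn n. \<Sum>i\<in>S. barA (f i) * (barA (g i w) * Tinvbar n a b w y))"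
    unfolding barH_def by (simp add: barA_sum barA_mult sum_distrib_right mult.assoc)
  also have "\<dots> = (\<Sum>i\<in>S. barA (f i) * barH n a b (g i) y)"
    unfolding barH_def by (subst sum.swap) (simp add: sum_distrib_left)
  finally show "barH n a b (\<lambda>z. \<Sum>i\<in>S. f i * g i z) y = (\<Sum>i\<in>S. barA (f i) * barH n a b (g i) y)" .
qed

lemma barH_add: "barH n a b (\<lambda>z. m1 z + m2 z) = (\<lambda>z. barH n a b m1 z + barH n a b m2 z)"
  by (auto simp: barH_def fun_eq_iff barA_add sum.distrib algebra_simps)
lemma barH_diff: "barH n a b (\<lambda>z. m1 z - m2 z) = (\<lambda>z. barH n a b m1 z - barH n a b m2 z)"
  by (auto simp: barH_def fun_eq_iff barA_diff sum_subtractf algebra_simps)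
lemma barH_scal: "barH n a b (\<lambda>z. c * m z) = (\<lambda>z. barA c * barH n a b m z)"
  by (auto simp: barH_def fun_eq_iff barA_mult sum_distrib_left algebra_simps)
lemma barH_Tb: assumes "x \<in> Wn n" shows "barH n a b (Tb x) = Tinvbar n a b x"
proof
  fix y
  have "barH n a b (Tb x) y = (\<Sum>w\<in>Wn n. if w = x then Tinvbar n a b w y else 0)"
    unfolding barH_def Tb_def by (intro sum.cong) auto
  also have "\<dots> = Tinvbar n a b x y" using assms finite_Wn by simp
  finally show "barH n a b (Tb x) y = Tinvbar n a b x y" .
qed




definition good :: "nat \<Rightarrow> 'g::linordered_ab_group_add \<Rightarrow> 'g \<Rightarrow> (int \<Rightarrow> int) \<Rightarrow> 'g hmod \<Rightarrow> bool" where
  "good n a b x C \<longleftrightarrow> suppW n C \<and> barH n a b C = C \<and> C x = 1 \<and>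
     (\<forall>y. C y \<noteq> 0 \<longrightarrow> y = x \<or> clen n y < clen n x) \<and> (\<forall>y. y \<noteq> x \<longrightarrow> C y \<in> Aneg)"

lemma exists_max: "finite S \<Longrightarrow> z0 \<in> S \<Longrightarrow> \<exists>z\<in>S. \<forall>u\<in>S. f u \<le> (f z :: nat)"
proof -
  assume S: "finite S" "z0 \<in> S"
  then have "Max (f ` S) \<in> f ` S" by (intro Max_in) auto
  then obtain z where z: "z \<in> S" "f z = Max (f ` S)" by auto
  then show ?thesis using S by (intro bexI[OF _ z(1)]) auto
qed














lemma sum_single:
  assumes "finite S" "a \<in> S" "\<And>v. v \<in> S \<Longrightarrow> v \<noteq> a \<Longrightarrow> f v = 0"
  shows "sum f S = f a"
proof -
  have "sum f S = f a + sum f (S - {a})" using assms(1,2) by (simp add: sum.remove)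
  also have "sum f (S - {a}) = 0" using assms(3) by (intro sum.neutral) auto
  finally show ?thesis by simp
qed

context
  fixes n :: nat and a b :: "'g::linordered_ab_group_add"
  assumes n: "1 \<le> n"
begin


lemma suppW_R: "s \<in> Sgens n \<Longrightarrow> suppW n m \<Longrightarrow> suppW n (rmulT n a b s m)"
  using Wn_not_comp_r[OF n] by (auto simp: suppW_def rmulT_eq)
lemma suppW_R': "s \<in> Sgens n \<Longrightarrow> suppW n m \<Longrightarrow> suppW n (rmulTinv n a b s m)"
  using suppW_R by (auto simp: suppW_def rmulTinv_eq)
lemma suppW_L: "s \<in> Sgens n \<Longrightarrow> suppW n m \<Longrightarrow> suppW n (lmulT n a b s m)"
  using Wn_not_comp_l[OF n] by (auto simp: suppW_def lmulT_def)

lemma one_of: "y \<in> Wn n \<Longrightarrow> s \<in> Sgens n \<Longrightarrow>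
   (clen n (y \<circ> s) < clen n y) = (\<not> clen n y < clen n (y \<circ> s))"
  using clen_gen[OF n] by fastforce

lemma R_R': assumes s: "s \<in> Sgens n" and m: "suppW n m"
  shows "rmulT n a b s (rmulTinv n a b s m) = m"
proof
  fix y
  show "rmulT n a b s (rmulTinv n a b s m) y = m y"
  proof (cases "y \<in> Wn n")
    case True
    have ys: "y \<circ> s \<in> Wn n" using Wn_comp_r[OF n s True] .
    have yss: "y \<circ> s \<circ> s = y" using Sgens_invol[OF s] by (simp add: comp_assoc)
    show ?thesis using one_of[OF True s] one_of[OF ys s]
      by (auto simp: rmulT_eq rmulTinv_eq yss algebra_simps)
  next
    case False
    have yss: "y \<circ> s \<circ> s = y" using Sgens_invol[OF s] by (simp add: comp_assoc)
    then show ?thesis using m Wn_not_comp_r[OF n s False] False by (simp add: suppW_def rmulT_eq rmulTinv_eq)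
  qed
qed

lemma R'_R: assumes s: "s \<in> Sgens n" and m: "suppW n m"
  shows "rmulTinv n a b s (rmulT n a b s m) = m"
proof
  fix y
  show "rmulTinv n a b s (rmulT n a b s m) y = m y"
  proof (cases "y \<in> Wn n")
    case True
    have ys: "y \<circ> s \<in> Wn n" using Wn_comp_r[OF n s True] .
    have yss: "y \<circ> s \<circ> s = y" using Sgens_invol[OF s] by (simp add: comp_assoc)
    show ?thesis using one_of[OF True s] one_of[OF ys s]
      by (auto simp: rmulT_eq rmulTinv_eq yss algebra_simps)
  next
    case False
    have yss: "y \<circ> s \<circ> s = y" using Sgens_invol[OF s] by (simp add: comp_assoc)
    then show ?thesis using m Wn_not_comp_r[OF n s False] False by (simp add: suppW_def rmulT_eq rmulTinv_eq)
  qed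
qed

lemma R'_R'_: assumes s: "s \<in> Sgens n" and m: "suppW n m"
  shows "rmulTinv n a b s (rmulTinv n a b s m) = (\<lambda>y. m y - cpar a b s * rmulTinv n a b s m y)"
proof
  fix y
  show "rmulTinv n a b s (rmulTinv n a b s m) y = m y - cpar a b s * rmulTinv n a b s m y"
  proof (cases "y \<in> Wn n")
    case True
    have ys: "y \<circ> s \<in> Wn n" using Wn_comp_r[OF n s True] .
    have yss: "y \<circ> s \<circ> s = y" using Sgens_invol[OF s] by (simp add: comp_assoc)
    show ?thesis using one_of[OF True s] one_of[OF ys s]
      by (auto simp: rmulT_eq rmulTinv_eq yss algebra_simps)
  next
    case False
    have yss: "y \<circ> s \<circ> s = y" using Sgens_invol[OF s] by (simp add: comp_assoc)
    then show ?thesis using m Wn_not_comp_r[OF n s False] False by (simp add: suppW_def rmulT_eq rmulTinv_eq)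
  qed
qed

lemma R_Tb_up: assumes x: "x \<in> Wn n" and s: "s \<in> Sgens n" and up: "clen n x < clen n (x \<circ> s)"
  shows "rmulT n a b s (Tb x) = Tb (x \<circ> s)"
proof
  fix y
  have xss: "x \<circ> s \<circ> s = x" using Sgens_invol[OF s] by (simp add: comp_assoc)
  have "y \<circ> s = x \<longleftrightarrow> y = x \<circ> s" using xss Sgens_invol[OF s] by (auto simp: comp_assoc)
  then show "rmulT n a b s (Tb x) y = Tb (x \<circ> s) y"
    using up by (auto simp: rmulT_eq Tb_def)
qed

lemma R_Tb_down: assumes x: "x \<in> Wn n" and s: "s \<in> Sgens n" and dn: "clen n (x \<circ> s) < clen n x"
  shows "rmulT n a b s (Tb x) = (\<lambda>y. Tb (x \<circ> s) y + cpar a b s * Tb x y)"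
proof
  fix y
  have xss: "x \<circ> s \<circ> s = x" using Sgens_invol[OF s] by (simp add: comp_assoc)
  have "y \<circ> s = x \<longleftrightarrow> y = x \<circ> s" using xss Sgens_invol[OF s] by (auto simp: comp_assoc)
  moreover have "x \<circ> s \<noteq> x" using dn by auto
  ultimately show "rmulT n a b s (Tb x) y = Tb (x \<circ> s) y + cpar a b s * Tb x y"
    using dn by (auto simp: rmulT_eq Tb_def)
qed

lemma L_Tb_up: assumes x: "x \<in> Wn n" and s: "s \<in> Sgens n" and up: "clen n x < clen n (s \<circ> x)"
  shows "lmulT n a b s (Tb x) = Tb (s \<circ> x)"
proof
  fix y
  have xss: "s \<circ> (s \<circ> x) = x" using Sgens_invol[OF s] by (simp add: comp_assoc[symmetric])
  have "s \<circ> y = x \<longleftrightarrow> y = s \<circ> x" using xss Sgens_invol[OF s] by (auto simp: comp_assoc[symmetric])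
  then show "lmulT n a b s (Tb x) y = Tb (s \<circ> x) y"
    using up by (auto simp: lmulT_def Tb_def)
qed

lemma R_lin: "rmulT n a b s (\<lambda>z. \<Sum>i\<in>S. f i * g i z) = (\<lambda>z. \<Sum>i\<in>S. f i * rmulT n a b s (g i) z)"
  by (auto simp: rmulT_eq fun_eq_iff sum.distrib sum_distrib_left algebra_simps)
lemma R'_lin: "rmulTinv n a b s (\<lambda>z. \<Sum>i\<in>S. f i * g i z) = (\<lambda>z. \<Sum>i\<in>S. f i * rmulTinv n a b s (g i) z)"
  by (auto simp: rmulTinv_eq rmulT_eq fun_eq_iff sum.distrib sum_subtractf sum_distrib_left algebra_simps)
lemma L_lin: "lmulT n a b s (\<lambda>z. \<Sum>i\<in>S. f i * g i z) = (\<lambda>z. \<Sum>i\<in>S. f i * lmulT n a b s (g i) z)"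
  by (auto simp: lmulT_def fun_eq_iff sum.distrib sum_distrib_left algebra_simps)

lemma L_R_comm:
  assumes s: "s \<in> Sgens n" and t: "t \<in> Sgens n" and m: "suppW n m"
  shows "lmulT n a b s (rmulT n a b t m) = rmulT n a b t (lmulT n a b s m)"
proof
  fix y
  show "lmulT n a b s (rmulT n a b t m) y = rmulT n a b t (lmulT n a b s m) y"
  proof (cases "y \<in> Wn n")
    case False
    then have "s \<circ> y \<notin> Wn n" "y \<circ> t \<notin> Wn n" "s \<circ> y \<circ> t \<notin> Wn n" "s \<circ> (y \<circ> t) \<notin> Wn n"
      using Wn_not_comp_l[OF n s] Wn_not_comp_r[OF n t] by blast+
    then show ?thesis using m False by (simp add: suppW_def lmulT_def rmulT_eq)
  next
    case True
    have as: "s \<circ> (y \<circ> t) = s \<circ> y \<circ> t" by (simp add: comp_assoc)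
    show ?thesis
    proof (cases "s \<circ> y = y \<circ> t")
      case False
      have e1: "clen n (s \<circ> y \<circ> t) < clen n (s \<circ> y) \<longleftrightarrow> clen n (y \<circ> t) < clen n y"
        using L3[OF n True s t False] .
      have e2: "clen n (s \<circ> y) < clen n y \<longleftrightarrow> clen n (s \<circ> y \<circ> t) < clen n (y \<circ> t)"
        using L3'[OF n True s t False] .
      show ?thesis unfolding lmulT_def rmulT_eq as using e1 e2 by (auto simp: algebra_simps)
    next
      case True2: True
      have sk: "cpar a b s = cpar a b t"
        using same_kind[OF n True s t True2] by (auto simp: cpar_def vpar_def vinv_def)
      have e: "s \<circ> y \<circ> t = y" using True2 Sgens_invol[OF t] by (metis comp_assoc comp_id)
      show ?thesis unfolding lmulT_def rmulT_eq as e sk True2 by (auto simp: algebra_simps)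
    qed
  qed
qed



lemma suppW_Qw: "set ws \<subseteq> Sgens n \<Longrightarrow> suppW n m \<Longrightarrow> suppW n (Qw n a b ws m)"
  by (induction ws) (auto intro: suppW_R)
lemma suppW_Lw: "set ws \<subseteq> Sgens n \<Longrightarrow> suppW n m \<Longrightarrow> suppW n (Lw n a b ws m)"
  by (induction ws) (auto intro: suppW_L)
lemma suppW_fold: "set ws \<subseteq> Sgens n \<Longrightarrow> suppW n m \<Longrightarrow> suppW n (fold (rmulTinv n a b) ws m)"
  by (induction ws arbitrary: m) (auto intro: suppW_R')

lemma Qw_fold: "set ws \<subseteq> Sgens n \<Longrightarrow> suppW n m \<Longrightarrow> Qw n a b ws (fold (rmulTinv n a b) ws m) = m"
proof (induction ws arbitrary: m)
  case (Cons s ws)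
  have s: "s \<in> Sgens n" and ws: "set ws \<subseteq> Sgens n" using Cons.prems by auto
  have q: "suppW n (rmulTinv n a b s m)" using suppW_R'[OF s Cons.prems(2)] .
  have "Qw n a b (s # ws) (fold (rmulTinv n a b) (s # ws) m) = rmulT n a b s (Qw n a b ws (fold (rmulTinv n a b) ws (rmulTinv n a b s m)))" by simp
  also have "\<dots> = rmulT n a b s (rmulTinv n a b s m)" using Cons.IH[OF ws q] by simp
  also have "\<dots> = m" using R_R'[OF s Cons.prems(2)] .
  finally show ?case .
qed simp

lemma fold_Qw: "set ws \<subseteq> Sgens n \<Longrightarrow> suppW n m \<Longrightarrow> fold (rmulTinv n a b) ws (Qw n a b ws m) = m"
proof (induction ws arbitrary: m)
  case (Cons s ws)
  have s: "s \<in> Sgens n" and ws: "set ws \<subseteq> Sgens n" using Cons.prems by auto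
  have q: "suppW n (Qw n a b ws m)" using suppW_Qw[OF ws Cons.prems(2)] .
  have "fold (rmulTinv n a b) (s # ws) (Qw n a b (s # ws) m) = fold (rmulTinv n a b) ws (rmulTinv n a b s (rmulT n a b s (Qw n a b ws m)))" by simp
  also have "\<dots> = fold (rmulTinv n a b) ws (Qw n a b ws m)" using R'_R[OF s q] by simp
  also have "\<dots> = m" using Cons.IH[OF ws Cons.prems(2)] .
  finally show ?case .
qed simp

lemma L_Qw: "s \<in> Sgens n \<Longrightarrow> set ws \<subseteq> Sgens n \<Longrightarrow> suppW n m \<Longrightarrow>
    lmulT n a b s (Qw n a b ws m) = Qw n a b ws (lmulT n a b s m)"
proof (induction ws)
  case (Cons t ws)
  have "suppW n (Qw n a b ws m)" using Cons suppW_Qw by auto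
  have t: "t \<in> Sgens n" and ws: "set ws \<subseteq> Sgens n" using Cons.prems by auto
  have "lmulT n a b s (Qw n a b (t # ws) m) = rmulT n a b t (lmulT n a b s (Qw n a b ws m))"
    using L_R_comm[OF Cons.prems(1) t \<open>suppW n (Qw n a b ws m)\<close>] by simp
  also have "\<dots> = Qw n a b (t # ws) (lmulT n a b s m)" using Cons.IH[OF Cons.prems(1) ws Cons.prems(3)] by simp
  finally show ?case .
qed simp

lemma Lw_Qw: "set rw \<subseteq> Sgens n \<Longrightarrow> set ws \<subseteq> Sgens n \<Longrightarrow> suppW n m \<Longrightarrow>
    Lw n a b rw (Qw n a b ws m) = Qw n a b ws (Lw n a b rw m)"
proof (induction rw)
  case (Cons s rw)
  have "suppW n (Lw n a b rw m)" using Cons suppW_Lw by auto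
  then show ?case using Cons L_Qw by auto
qed simp

lemma Lw_Tb: "set rw \<subseteq> Sgens n \<Longrightarrow> length rw = clen n (word_prod rw) \<Longrightarrow> Lw n a b rw (Tb id) = Tb (word_prod rw)"
proof (induction rw)
  case (Cons s rw)
  have r: "length rw = clen n (word_prod rw)" using reduced_tail[OF n Cons(2,3)] .
  have x: "word_prod rw \<in> Wn n" using word_prod_Wn[OF n] Cons by auto
  have "clen n (word_prod rw) < clen n (s \<circ> word_prod rw)" using Cons(3) r by (simp add: comp_def)
  then show ?case using Cons r L_Tb_up[OF x] by (simp add: comp_def id_def)
qed simp

lemma Qw_Tb_id: "set ws \<subseteq> Sgens n \<Longrightarrow> length ws = clen n (word_prod ws) \<Longrightarrow> Qw n a b ws (Tb id) = Tb (word_prod (rev ws))"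
proof (induction ws)
  case (Cons s ws)
  have r: "length ws = clen n (word_prod ws)" using reduced_tail[OF n Cons(2,3)] .
  have x: "word_prod (rev ws) \<in> Wn n" using word_prod_Wn[OF n] Cons by auto
  have ws: "set ws \<subseteq> Sgens n" "set (s # ws) \<subseteq> Sgens n" using Cons by auto
  have c1: "clen n (word_prod (rev ws)) = length ws"
    using clen_inv[OF n word_prod_Wn[OF n ws(1)]] inv_word_prod[OF ws(1)] r by simp
  have c2: "clen n (word_prod (rev (s # ws))) = Suc (length ws)"
    using clen_inv[OF n word_prod_Wn[OF n ws(2)]] inv_word_prod[OF ws(2)] Cons(3) by (simp add: comp_def)
  have "word_prod (rev (s # ws)) = word_prod (rev ws) \<circ> s" by (simp add: word_prod_snoc)
  then have "clen n (word_prod (rev ws)) < clen n (word_prod (rev ws) \<circ> s)" using c1 c2 by (simp add: comp_def)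
  then show ?case using Cons r R_Tb_up[OF x] \<open>word_prod (rev (s # ws)) = _\<close> by (simp add: comp_def id_def)
qed simp

lemma Qw_lin: "Qw n a b ws (\<lambda>z. \<Sum>i\<in>S. f i * g i z) = (\<lambda>z. \<Sum>i\<in>S. f i * Qw n a b ws (g i) z)"
proof (induction ws)
  case (Cons s ws)
  show ?case using R_lin by (simp add: Cons)
qed simp

lemma Qw_indep:
  assumes ws1: "set ws1 \<subseteq> Sgens n" "length ws1 = clen n (word_prod ws1)"
    and ws2: "set ws2 \<subseteq> Sgens n" "length ws2 = clen n (word_prod ws2)"
    and eq: "word_prod ws1 = word_prod ws2" and m: "suppW n m"
  shows "Qw n a b ws1 m = Qw n a b ws2 m"
proof -
  have "Qw n a b ws1 (Tb x) = Qw n a b ws2 (Tb x)" if x: "x \<in> Wn n" for x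
  proof -
    obtain rw where rw: "length rw = clen n x" "set rw \<subseteq> Sgens n" "word_prod rw = x"
      using clen_word[OF n x] by blast
    have Tx: "Tb x = Lw n a b rw (Tb id)" using Lw_Tb[OF rw(2)] rw by simp
    have "Qw n a b ws1 (Tb x) = Lw n a b rw (Qw n a b ws1 (Tb id))"
      unfolding Tx using Lw_Qw[OF rw(2) ws1(1) suppW_Tb[OF id_Wn]] by simp
    also have "\<dots> = Lw n a b rw (Qw n a b ws2 (Tb id))"
      using Qw_Tb_id[OF ws1] Qw_Tb_id[OF ws2] inv_word_prod[OF ws1(1)] inv_word_prod[OF ws2(1)] eq by simp
    also have "\<dots> = Qw n a b ws2 (Tb x)"
      unfolding Tx using Lw_Qw[OF rw(2) ws2(1) suppW_Tb[OF id_Wn]] by simp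
    finally show ?thesis .
  qed
  then show ?thesis
    by (subst (1 2) suppW_expand[OF m]) (simp add: Qw_lin)
qed

lemma fold_indep:
  assumes ws1: "set ws1 \<subseteq> Sgens n" "length ws1 = clen n (word_prod ws1)"
    and ws2: "set ws2 \<subseteq> Sgens n" "length ws2 = clen n (word_prod ws2)"
    and eq: "word_prod ws1 = word_prod ws2"
  shows "fold (rmulTinv n a b) ws1 (Tb id) = fold (rmulTinv n a b) ws2 (Tb id)"
proof -
  let ?P = "fold (rmulTinv n a b) ws2 (Tb id)"
  have sP: "suppW n ?P" using suppW_fold[OF ws2(1) suppW_Tb[OF id_Wn]] .
  have "Qw n a b ws1 ?P = Qw n a b ws2 ?P" using Qw_indep[OF ws1 ws2 eq sP] .
  also have "\<dots> = Tb id" using Qw_fold[OF ws2(1) suppW_Tb[OF id_Wn]] .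
  finally have "Qw n a b ws1 ?P = Tb id" .
  then have "fold (rmulTinv n a b) ws1 (Qw n a b ws1 ?P) = fold (rmulTinv n a b) ws1 (Tb id)" by simp
  then show ?thesis using fold_Qw[OF ws1(1) sP] by simp
qed

lemma red_word: assumes x: "x \<in> Wn n"
  shows "set (red_word n x) \<subseteq> Sgens n \<and> word_prod (red_word n x) = x \<and> length (red_word n x) = clen n x"
proof -
  obtain rw where rw: "length rw = clen n x" "set rw \<subseteq> Sgens n" "word_prod rw = x"
    using clen_word[OF n x] by blast
  then show ?thesis unfolding red_word_def by (rule_tac someI[where x=rw]) simp
qed

lemma Tinvbar_up:
  assumes x: "x \<in> Wn n" and s: "s \<in> Sgens n" and up: "clen n (x \<circ> s) = clen n x + 1"
  shows "Tinvbar n a b (x \<circ> s) = rmulTinv n a b s (Tinvbar n a b x)"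
proof -
  have xs: "x \<circ> s \<in> Wn n" using Wn_comp_r[OF n s x] .
  note r1 = red_word[OF xs] and r2 = red_word[OF x]
  let ?ws = "red_word n x @ [s]"
  have "fold (rmulTinv n a b) (red_word n (x \<circ> s)) (Tb id) = fold (rmulTinv n a b) ?ws (Tb id)"
    by (rule fold_indep) (use r1 r2 s up in \<open>auto simp: word_prod_snoc\<close>)
  then show ?thesis by (simp add: Tinvbar_def)
qed

lemma suppW_Tinvbar: "x \<in> Wn n \<Longrightarrow> suppW n (Tinvbar n a b x)"
  unfolding Tinvbar_def using red_word suppW_fold suppW_Tb[OF id_Wn] by blast



lemma suppW_barH: "suppW n (barH n a b m)"
  unfolding suppW_def
proof (intro allI impI)
  fix y assume y: "y \<notin> Wn n"
  have "\<forall>w\<in>Wn n. Tinvbar n a b w y = 0" using suppW_Tinvbar y by (auto simp: suppW_def)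
  then show "barH n a b m y = 0" by (simp add: barH_def)
qed

lemma suppW_hC: "s \<in> Sgens n \<Longrightarrow> suppW n m \<Longrightarrow> suppW n (hC n a b s m)"
  using suppW_R[of s m] by (auto simp: suppW_def hC_def)

lemma barH_R_Tb:
  assumes x: "x \<in> Wn n" and s: "s \<in> Sgens n"
  shows "barH n a b (rmulT n a b s (Tb x)) = rmulTinv n a b s (Tinvbar n a b x)"
proof (cases "clen n x < clen n (x \<circ> s)")
  case True
  have xs: "x \<circ> s \<in> Wn n" using Wn_comp_r[OF n s x] .
  have cxs: "clen n (x \<circ> s) = clen n x + 1" using True clen_gen[OF n x s] by auto
  have "barH n a b (rmulT n a b s (Tb x)) = barH n a b (Tb (x \<circ> s))"
    using R_Tb_up[OF x s True] by simp
  also have "\<dots> = Tinvbar n a b (x \<circ> s)" by (rule barH_Tb[OF xs])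
  also have "\<dots> = rmulTinv n a b s (Tinvbar n a b x)" by (rule Tinvbar_up[OF x s cxs])
  finally show ?thesis .
next
  case False
  then have dn: "clen n (x \<circ> s) < clen n x" using clen_gen[OF n x s] by auto
  define z where "z = x \<circ> s"
  have z: "z \<in> Wn n" using Wn_comp_r[OF n s x] by (simp add: z_def)
  have zs: "z \<circ> s = x" using Sgens_invol[OF s] by (simp add: z_def comp_assoc)
  have cz: "clen n (z \<circ> s) = clen n z + 1" using dn clen_gen[OF n x s] zs by (auto simp: z_def)
  have T: "Tinvbar n a b x = rmulTinv n a b s (Tinvbar n a b z)"
    using Tinvbar_up[OF z s cz] zs by simp
  have "barH n a b (rmulT n a b s (Tb x)) = (\<lambda>y. Tinvbar n a b z y + barA (cpar a b s) * Tinvbar n a b x y)"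
  proof -
    have e1: "barH n a b (Tb z) = Tinvbar n a b z" by (rule barH_Tb[OF z])
    have e2: "barH n a b (Tb x) = Tinvbar n a b x" by (rule barH_Tb[OF x])
    show ?thesis using R_Tb_down[OF x s dn] e1 e2 by (simp add: z_def barH_add barH_scal)
  qed
  also have "\<dots> = (\<lambda>y. Tinvbar n a b z y - cpar a b s * rmulTinv n a b s (Tinvbar n a b z) y)"
    using T by (simp add: barA_cpar)
  also have "\<dots> = rmulTinv n a b s (rmulTinv n a b s (Tinvbar n a b z))"
    using R'_R'_[OF s suppW_Tinvbar[OF z]] by simp
  also have "\<dots> = rmulTinv n a b s (Tinvbar n a b x)" using T by simp
  finally show ?thesis .
qed

lemma barH_R:
  assumes s: "s \<in> Sgens n" and m: "suppW n m"
  shows "barH n a b (rmulT n a b s m) = rmulTinv n a b s (barH n a b m)"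
proof -
  have "rmulT n a b s m = (\<lambda>z. \<Sum>x\<in>Wn n. m x * rmulT n a b s (Tb x) z)"
    by (subst suppW_expand[OF m]) (simp add: R_lin)
  then have "barH n a b (rmulT n a b s m) = (\<lambda>z. \<Sum>x\<in>Wn n. barA (m x) * barH n a b (rmulT n a b s (Tb x)) z)"
    by (simp add: barH_lin)
  also have "\<dots> = (\<lambda>z. \<Sum>x\<in>Wn n. barA (m x) * rmulTinv n a b s (Tinvbar n a b x) z)"
    using barH_R_Tb[OF _ s] by (auto intro!: sum.cong)
  also have "\<dots> = rmulTinv n a b s (\<lambda>z. \<Sum>x\<in>Wn n. barA (m x) * Tinvbar n a b x z)"
    by (simp add: R'_lin)
  also have "\<dots> = rmulTinv n a b s (barH n a b m)" by (simp add: barH_def)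
  finally show ?thesis .
qed

lemma barH_hC:
  assumes s: "s \<in> Sgens n" and m: "suppW n m"
  shows "barH n a b (hC n a b s m) = hC n a b s (barH n a b m)"
proof -
  have "barH n a b (hC n a b s m) = (\<lambda>y. barH n a b (rmulT n a b s m) y + barA (vinv a b s) * barH n a b m y)"
    unfolding hC_def by (simp add: barH_add barH_scal)
  also have "\<dots> = hC n a b s (barH n a b m)"
    unfolding barH_R[OF s m] hC_def by (auto simp: rmulTinv_eq barA_vinv cpar_def algebra_simps)
  finally show ?thesis .
qed



lemma Tinvbar_tri_aux:
  "set ws \<subseteq> Sgens n \<Longrightarrow> length ws = clen n (word_prod ws) \<Longrightarrow>
   fold (rmulTinv n a b) ws (Tb id) (word_prod ws) = 1 \<and>
   (\<forall>y. fold (rmulTinv n a b) ws (Tb id) y \<noteq> 0 \<longrightarrow> y = word_prod ws \<or> clen n y < length ws)"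
proof (induction ws rule: rev_induct)
  case Nil
  then show ?case by (auto simp: Tb_def)
next
  case (snoc s ws)
  have r: "length ws = clen n (word_prod ws)" using reduced_butlast[OF n snoc(2,3)] .
  have ws: "set ws \<subseteq> Sgens n" and s: "s \<in> Sgens n" using snoc by auto
  define x where "x = word_prod ws"
  define F where "F = fold (rmulTinv n a b) ws (Tb id)"
  have x: "x \<in> Wn n" using word_prod_Wn[OF n ws] by (simp add: x_def)
  have IH: "F x = 1" "\<And>y. F y \<noteq> 0 \<Longrightarrow> y = x \<or> clen n y < length ws"
    using snoc(1)[OF ws r] by (auto simp: F_def x_def id_def)
  have sF: "suppW n F" using suppW_fold[OF ws suppW_Tb[OF id_Wn]] by (simp add: F_def)
  have cx: "clen n x = length ws" using r by (simp add: x_def)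
  have cxs: "clen n (x \<circ> s) = Suc (length ws)" using snoc(3) by (metis length_append_singleton word_prod_snoc x_def)
  have xss: "x \<circ> s \<circ> s = x" using Sgens_invol[OF s] by (simp add: comp_assoc)
  have G: "fold (rmulTinv n a b) (ws @ [s]) (Tb id) = rmulTinv n a b s F" by (simp add: F_def)
  have "x \<circ> s \<noteq> x" using cxs cx by auto
  then have Fxs: "F (x \<circ> s) = 0" using IH(2)[of "x \<circ> s"] cxs cx by auto
  have "rmulTinv n a b s F (x \<circ> s) = 1"
    using IH(1) Fxs cx cxs xss by (simp add: rmulTinv_eq rmulT_eq)
  moreover have "y = x \<circ> s \<or> clen n y < length (ws @ [s])" if ne: "rmulTinv n a b s F y \<noteq> 0" for y
  proof -
    have y: "y \<in> Wn n"
    proof (rule ccontr)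
      assume "y \<notin> Wn n"
      then have "F y = 0" "F (y \<circ> s) = 0" using sF Wn_not_comp_r[OF n s] by (auto simp: suppW_def)
      then show False using ne by (simp add: rmulTinv_eq rmulT_eq split: if_split_asm)
    qed
    have "F (y \<circ> s) \<noteq> 0 \<or> F y \<noteq> 0" using ne by (auto simp: rmulTinv_eq rmulT_eq split: if_split_asm)
    then show ?thesis
    proof
      assume "F (y \<circ> s) \<noteq> 0"
      then have "y \<circ> s = x \<or> clen n (y \<circ> s) < length ws" using IH(2) by blast
      moreover have "y \<circ> s = x \<Longrightarrow> y = x \<circ> s" using Sgens_invol[OF s] by (auto simp: comp_assoc)
      moreover have "clen n y \<le> clen n (y \<circ> s) + 1" using clen_gen[OF n y s] by auto
      ultimately show ?thesis by auto
    next
      assume "F y \<noteq> 0"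
      then show ?thesis using IH(2) cx by force
    qed
  qed
  ultimately show ?case using G by (simp add: x_def word_prod_snoc comp_def id_def)
qed

lemma Tinvbar_tri:
  assumes x: "x \<in> Wn n"
  shows "Tinvbar n a b x x = 1" "Tinvbar n a b x y \<noteq> 0 \<Longrightarrow> y = x \<or> clen n y < clen n x"
  using Tinvbar_tri_aux[of "red_word n x"] red_word[OF x] by (auto simp: Tinvbar_def)

lemma bar_aneg_zero:
  assumes s: "suppW n D" and bD: "barH n a b D = D" and an: "\<forall>y. D y \<in> Aneg"
  shows "D = (\<lambda>y. 0)"
proof (rule ccontr)
  assume "D \<noteq> (\<lambda>y. 0)"
  then obtain y0 where y0: "D y0 \<noteq> 0" by auto
  then have "y0 \<in> {y \<in> Wn n. D y \<noteq> 0}" using s by (auto simp: suppW_def)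
  then obtain z where z: "z \<in> Wn n" "D z \<noteq> 0" and mx: "\<And>u. u \<in> Wn n \<Longrightarrow> D u \<noteq> 0 \<Longrightarrow> clen n u \<le> clen n z"
    using exists_max[of "{y \<in> Wn n. D y \<noteq> 0}" y0 "clen n"] finite_Wn by auto
  have "barH n a b D z = (\<Sum>w\<in>Wn n. barA (D w) * Tinvbar n a b w z)" by (simp add: barH_def)
  also have "\<dots> = barA (D z) * Tinvbar n a b z z + (\<Sum>w\<in>Wn n - {z}. barA (D w) * Tinvbar n a b w z)"
    using z finite_Wn by (simp add: sum.remove)
  also have "\<dots> = barA (D z) * Tinvbar n a b z z"
  proof -
      have "\<forall>w\<in>Wn n - {z}. barA (D w) * Tinvbar n a b w z = 0"
      proof
        fix w assume w: "w \<in> Wn n - {z}"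
        show "barA (D w) * Tinvbar n a b w z = 0"
        proof (cases "Tinvbar n a b w z = 0")
          case False
          then have "clen n z < clen n w" using Tinvbar_tri(2)[of w z] w by auto
          then have "D w = 0" using mx[of w] w by force
          then show ?thesis by simp
        qed simp
      qed
      then have "(\<Sum>w\<in>Wn n - {z}. barA (D w) * Tinvbar n a b w z) = 0" by (rule sum.neutral)
      then show ?thesis by simp
  qed
  also have "\<dots> = barA (D z)" using Tinvbar_tri(1)[OF z(1)] by simp
  finally have "barA (D z) = D z" using bD by simp
  then have "D z = 0" using Aneg_bar_zero an by blast
  with z show False by simp
qed



definition KLP :: "(int \<Rightarrow> int) \<Rightarrow> 'g hmod \<Rightarrow> bool" where
  "KLP x C \<longleftrightarrow> (\<forall>y. y \<notin> Wn n \<longrightarrow> C y = 0) \<and> barH n a b C = C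
                     \<and> C x - 1 \<in> Aneg \<and> (\<forall>y. y \<noteq> x \<longrightarrow> C y \<in> Aneg)"

lemma KLP_unique: assumes "KLP x C1" "KLP x C2" shows "C1 = C2"
proof -
  define D where "D = (\<lambda>y. C1 y - C2 y)"
  have "suppW n D" using assms by (auto simp: KLP_def D_def suppW_def)
  moreover have "barH n a b D = D" using assms by (simp add: D_def barH_diff KLP_def)
  moreover have "\<forall>y. D y \<in> Aneg"
  proof
    fix y show "D y \<in> Aneg"
    proof (cases "y = x")
      case True
      have "D y = (C1 x - 1) - (C2 x - 1)" by (simp add: D_def True)
      moreover have "C1 x - 1 \<in> Aneg" "C2 x - 1 \<in> Aneg" using assms by (auto simp: KLP_def)
      ultimately show ?thesis by (metis Aneg_diff)
    next
      case False
      have "C1 y \<in> Aneg" "C2 y \<in> Aneg" using assms False by (auto simp: KLP_def)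
      then show ?thesis using Aneg_diff by (simp add: D_def)
    qed
  qed
  ultimately have "D = (\<lambda>y. 0)" by (rule bar_aneg_zero)
  then show ?thesis by (auto simp: D_def fun_eq_iff)
qed

lemma good_KLP: "good n a b x C \<Longrightarrow> KLP x C"
  by (auto simp: good_def KLP_def suppW_def)

lemma good_KLC: assumes "good n a b x C" shows "KLC n a b x = C"
proof -
  have "KLC n a b x = (THE C. KLP x C)" by (simp add: KLC_def KLP_def)
  also have "\<dots> = C" using good_KLP[OF assms] KLP_unique by blast
  finally show ?thesis .
qed

lemma reduce_step:
  assumes x: "x \<in> Wn n"
    and IH: "\<And>z. z \<in> Wn n \<Longrightarrow> clen n z < clen n x \<Longrightarrow> good n a b z (KLC n a b z)"
    and m: "suppW n m" "barH n a b m = m" "m x = 1" "\<forall>y. m y \<noteq> 0 \<longrightarrow> y = x \<or> clen n y < clen n x"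
  shows "j \<le> clen n x \<Longrightarrow> \<exists>m'. suppW n m' \<and> barH n a b m' = m' \<and> m' x = 1 \<and>
       (\<forall>y. m' y \<noteq> 0 \<longrightarrow> y = x \<or> clen n y < clen n x) \<and>
       (\<forall>y. y \<noteq> x \<longrightarrow> clen n x - j \<le> clen n y \<longrightarrow> m' y \<in> Aneg)"
proof (induction j)
  case 0
  have "\<forall>y. y \<noteq> x \<longrightarrow> clen n x - 0 \<le> clen n y \<longrightarrow> m y \<in> Aneg"
  proof (intro allI impI)
    fix y assume "y \<noteq> x" "clen n x - 0 \<le> clen n y"
    then have "m y = 0" using m(4) by force
    then show "m y \<in> Aneg" by simp
  qed
  then show ?case using m by blast
next
  case (Suc j)
  then obtain m' where m': "suppW n m'" "barH n a b m' = m'" "m' x = 1"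
     "\<forall>y. m' y \<noteq> 0 \<longrightarrow> y = x \<or> clen n y < clen n x"
     "\<forall>y. y \<noteq> x \<longrightarrow> clen n x - j \<le> clen n y \<longrightarrow> m' y \<in> Aneg" by auto
  define L where "L = clen n x - Suc j"
  have L: "L < clen n x" using Suc.prems by (simp add: L_def)
  define Z where "Z = {z \<in> Wn n. clen n z = L}"
  define cz where "cz = (\<lambda>z. SOME c. barA c = c \<and> m' z - c \<in> Aneg)"
  have cz: "barA (cz z) = cz z" "m' z - cz z \<in> Aneg" for z
    using someI_ex[OF sym_exists[of "m' z"]] by (auto simp: cz_def)
  have gZ: "good n a b z (KLC n a b z)" if "z \<in> Z" for z using IH that L by (auto simp: Z_def)
  define m'' where "m'' = (\<lambda>y. m' y - (\<Sum>z\<in>Z. cz z * KLC n a b z y))"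
  have Kz: "KLC n a b z y = 0" if "z \<in> Z" "y \<noteq> z" "\<not> clen n y < L" for z y
    using gZ[OF that(1)] that by (auto simp: good_def Z_def)
  have s'': "suppW n m''"
    using m'(1) gZ by (auto simp: suppW_def m''_def good_def intro!: sum.neutral)
  have b'': "barH n a b m'' = m''"
  proof -
    have "barH n a b m'' = (\<lambda>y. barH n a b m' y - barH n a b (\<lambda>y. \<Sum>z\<in>Z. cz z * KLC n a b z y) y)"
      unfolding m''_def by (rule barH_diff)
    also have "\<dots> = m''"
      using m'(2) gZ cz(1) by (simp add: barH_lin m''_def good_def)
    finally show ?thesis .
  qed
  have x'': "m'' x = 1"
  proof -
    have "\<forall>z\<in>Z. cz z * KLC n a b z x = 0"
    proof
      fix z assume z: "z \<in> Z"
      then have "x \<noteq> z" "\<not> clen n x < L" using L by (auto simp: Z_def)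
      then show "cz z * KLC n a b z x = 0" using Kz[OF z] by simp
    qed
    then have "(\<Sum>z\<in>Z. cz z * KLC n a b z x) = 0" by (rule sum.neutral)
    then show ?thesis using m'(3) by (simp add: m''_def)
  qed
  have t'': "\<forall>y. m'' y \<noteq> 0 \<longrightarrow> y = x \<or> clen n y < clen n x"
  proof (intro allI impI)
    fix y assume ne: "m'' y \<noteq> 0"
    show "y = x \<or> clen n y < clen n x"
    proof (cases "m' y = 0")
      case True
      then have "(\<Sum>z\<in>Z. cz z * KLC n a b z y) \<noteq> 0" using ne by (simp add: m''_def)
      have "\<exists>z\<in>Z. cz z * KLC n a b z y \<noteq> 0"
      proof (rule ccontr)
        assume "\<not> (\<exists>z\<in>Z. cz z * KLC n a b z y \<noteq> 0)"
        then have "(\<Sum>z\<in>Z. cz z * KLC n a b z y) = 0" by (intro sum.neutral) auto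
        with \<open>(\<Sum>z\<in>Z. cz z * KLC n a b z y) \<noteq> 0\<close> show False by simp
      qed
      then obtain z where "z \<in> Z" "cz z * KLC n a b z y \<noteq> 0" by blast
      then have z: "z \<in> Z" "KLC n a b z y \<noteq> 0" by auto
      then have "y = z \<or> clen n y < L" using Kz by blast
      then show ?thesis using z L by (auto simp: Z_def)
    next
      case False
      then show ?thesis using m'(4) by blast
    qed
  qed
  have a'': "\<forall>y. y \<noteq> x \<longrightarrow> clen n x - Suc j \<le> clen n y \<longrightarrow> m'' y \<in> Aneg"
  proof (intro allI impI)
    fix y assume yx: "y \<noteq> x" and ly: "clen n x - Suc j \<le> clen n y"
    show "m'' y \<in> Aneg"
    proof (cases "y \<in> Wn n")
      case False
      then show ?thesis using s'' by (simp add: suppW_def)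
    next
      case yW: True
      show ?thesis
      proof (cases "clen n y = L")
        case True
        then have yZ: "y \<in> Z" using yW by (simp add: Z_def)
        have "(\<Sum>z\<in>Z. cz z * KLC n a b z y) = cz y * KLC n a b y y"
          by (rule sum_single) (use finite_Wn yZ Kz True in \<open>auto simp: Z_def\<close>)
        also have "\<dots> = cz y" using gZ[OF yZ] by (simp add: good_def)
        finally show ?thesis using cz(2)[of y] by (simp add: m''_def)
      next
        case False
        then have ly': "clen n x - j \<le> clen n y" using ly by (simp add: L_def)
        have "\<forall>z\<in>Z. cz z * KLC n a b z y = 0"
        proof
          fix z assume z: "z \<in> Z"
          then have "y \<noteq> z" "\<not> clen n y < L" using False ly by (auto simp: Z_def L_def)
          then show "cz z * KLC n a b z y = 0" using Kz[OF z] by simp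
        qed
        then have "(\<Sum>z\<in>Z. cz z * KLC n a b z y) = 0" by (rule sum.neutral)
        then show ?thesis using m'(5) yx ly' by (simp add: m''_def)
      qed
    qed
  qed
  show ?case using s'' b'' x'' t'' a'' by blast
qed

lemma exists_good_aux: "\<forall>x\<in>Wn n. clen n x = k \<longrightarrow> good n a b x (KLC n a b x)"
proof (induction k rule: less_induct)
  case (less k)
  show ?case
  proof (intro ballI impI)
    fix x assume x: "x \<in> Wn n" and k: "clen n x = k"
    have IH: "\<And>z. z \<in> Wn n \<Longrightarrow> clen n z < clen n x \<Longrightarrow> good n a b z (KLC n a b z)"
      using less k by blast
    obtain m where m: "suppW n m" "barH n a b m = m" "m x = 1" "\<forall>y. m y \<noteq> 0 \<longrightarrow> y = x \<or> clen n y < clen n x"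
    proof (cases "x = id")
      case True
      have "red_word n id = []" using red_word[OF id_Wn] by simp
      have "barH n a b (Tb id) = Tinvbar n a b id" by (rule barH_Tb[OF id_Wn])
      also have "\<dots> = Tb id" unfolding Tinvbar_def using \<open>red_word n id = []\<close> by simp
      finally have "barH n a b (Tb id) = Tb id" .
      then show ?thesis
      proof (intro that)
        show "suppW n (Tb id)" by (rule suppW_Tb[OF id_Wn])
        show "Tb id x = 1" using True by (simp add: Tb_def)
        show "\<forall>y. Tb id y \<noteq> 0 \<longrightarrow> y = x \<or> clen n y < clen n x" using True by (simp add: Tb_def)
      qed
    next
      case False
      obtain s where s: "s \<in> Sgens n" "N2 n (x \<circ> s) = N2 n x - 2"
        using descent_exists[OF n x False] by blast
      define w where "w = x \<circ> s"
      have w: "w \<in> Wn n" using Wn_comp_r[OF n s(1) x] by (simp add: w_def)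
      have cw: "clen n x = clen n w + 1"
        using clen_N2[OF n x] clen_N2[OF n w] s(2) by (simp add: w_def)
      have ws: "w \<circ> s = x" using Sgens_invol[OF s(1)] by (simp add: w_def comp_assoc)
      have gw: "good n a b w (KLC n a b w)" using IH[OF w] cw by simp
      define Cw where "Cw = KLC n a b w"
      note gw' = gw[unfolded good_def, folded Cw_def]
      define m where "m = hC n a b s Cw"
      have sm: "suppW n m" using suppW_R[OF s(1)] gw' by (auto simp: m_def hC_def suppW_def)
      have bm: "barH n a b m = m" using barH_hC[OF s(1)] gw' by (simp add: m_def)
      have Cwx: "Cw x = 0" using gw' cw by force
      have xsw: "x \<circ> s = w" by (simp add: w_def)
      have mx: "m x = 1" using gw' Cwx cw xsw by (simp add: m_def hC_def rmulT_eq)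
      have tm: "\<forall>y. m y \<noteq> 0 \<longrightarrow> y = x \<or> clen n y < clen n x"
      proof (intro allI impI)
        fix y assume ne: "m y \<noteq> 0"
        have y: "y \<in> Wn n" using sm ne by (auto simp: suppW_def)
        have "Cw (y \<circ> s) \<noteq> 0 \<or> Cw y \<noteq> 0"
        proof (rule ccontr)
          assume "\<not> (Cw (y \<circ> s) \<noteq> 0 \<or> Cw y \<noteq> 0)"
          then have "Cw (y \<circ> s) = 0" "Cw y = 0" by auto
          then have "m y = 0" by (simp add: m_def hC_def rmulT_eq)
          with ne show False by simp
        qed
        then show "y = x \<or> clen n y < clen n x"
        proof
          assume "Cw (y \<circ> s) \<noteq> 0"
          then have "y \<circ> s = w \<or> clen n (y \<circ> s) < clen n w" using gw' by blast
          moreover have "y \<circ> s = w \<Longrightarrow> y = x" using Sgens_invol[OF s(1)] ws by (metis comp_assoc comp_id)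
          moreover have "clen n y \<le> clen n (y \<circ> s) + 1" using clen_gen[OF n y s(1)] by auto
          ultimately show ?thesis using cw by auto
        next
          assume "Cw y \<noteq> 0"
          then show ?thesis using gw' cw by force
        qed
      qed
      show ?thesis using that[OF sm bm mx tm] .
    qed
    obtain m' where m': "suppW n m'" "barH n a b m' = m'" "m' x = 1"
       "\<forall>y. m' y \<noteq> 0 \<longrightarrow> y = x \<or> clen n y < clen n x"
       "\<forall>y. y \<noteq> x \<longrightarrow> clen n x - clen n x \<le> clen n y \<longrightarrow> m' y \<in> Aneg"
      using reduce_step[OF x IH m, of "clen n x"] by blast
    have "good n a b x m'" using m' by (simp add: good_def)
    then show "good n a b x (KLC n a b x)" using good_KLC by simp
  qed
qed

lemma KLC_good: "x \<in> Wn n \<Longrightarrow> good n a b x (KLC n a b x)"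
  using exists_good_aux by blast



abbreviation KK where "KK \<equiv> KLC n a b"
abbreviation ExC where "ExC c \<equiv> (\<lambda>y. \<Sum>w\<in>Wn n. c w * KLC n a b w y)"

lemma Kg: "x \<in> Wn n \<Longrightarrow> good n a b x (KK x)" using KLC_good .

lemma K_self: "x \<in> Wn n \<Longrightarrow> KK x x = 1" using Kg by (simp add: good_def)
lemma K_tri: "x \<in> Wn n \<Longrightarrow> KK x y \<noteq> 0 \<Longrightarrow> y = x \<or> clen n y < clen n x" using Kg by (simp add: good_def)
lemma K_neg: "x \<in> Wn n \<Longrightarrow> y \<noteq> x \<Longrightarrow> KK x y \<in> Aneg" using Kg by (simp add: good_def)
lemma K_bar: "x \<in> Wn n \<Longrightarrow> barH n a b (KK x) = KK x" using Kg by (simp add: good_def)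
lemma K_supp: "x \<in> Wn n \<Longrightarrow> suppW n (KK x)" using Kg by (simp add: good_def)

lemma eval_Ex:
  assumes z: "z \<in> Wn n"
  shows "ExC c z = c z + (\<Sum>v\<in>{v\<in>Wn n. clen n z < clen n v}. c v * KK v z)"
proof -
  have "ExC c z = c z * KK z z + (\<Sum>v\<in>Wn n - {z}. c v * KK v z)"
    using z finite_Wn by (simp add: sum.remove)
  also have "(\<Sum>v\<in>Wn n - {z}. c v * KK v z) = (\<Sum>v\<in>{v\<in>Wn n. clen n z < clen n v}. c v * KK v z)"
  proof (rule sum.mono_neutral_right)
    show "finite (Wn n - {z})" using finite_Wn by simp
    show "{v\<in>Wn n. clen n z < clen n v} \<subseteq> Wn n - {z}" by auto
    show "\<forall>v\<in>Wn n - {z} - {v\<in>Wn n. clen n z < clen n v}. c v * KK v z = 0"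
      using K_tri by force
  qed
  finally show ?thesis using K_self[OF z] by simp
qed

lemma top_zero:
  assumes c: "suppW n c" and m0: "\<And>y. y \<in> Wn n \<Longrightarrow> L < clen n y \<Longrightarrow> ExC c y = 0"
  shows "\<And>w. L < clen n w \<Longrightarrow> c w = 0"
proof (rule ccontr)
  fix w assume Lw: "L < clen n w" and cw: "c w \<noteq> 0"
  then have "w \<in> {y \<in> Wn n. c y \<noteq> 0}" using c by (auto simp: suppW_def)
  then obtain z where z: "z \<in> Wn n" "c z \<noteq> 0" and mx: "\<And>u. u \<in> Wn n \<Longrightarrow> c u \<noteq> 0 \<Longrightarrow> clen n u \<le> clen n z"
    using exists_max[of "{y \<in> Wn n. c y \<noteq> 0}" w "clen n"] finite_Wn by auto
  have "clen n w \<le> clen n z" using mx[of w] \<open>w \<in> _\<close> by auto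
  then have Lz: "L < clen n z" using Lw by simp
  have "(\<Sum>v\<in>{v\<in>Wn n. clen n z < clen n v}. c v * KK v z) = 0"
    using mx by (intro sum.neutral) force
  then have "ExC c z = c z" using eval_Ex[OF z(1)] by simp
  then show False using m0[OF z(1) Lz] z(2) by simp
qed

lemma Ex_unique: assumes "suppW n c" "suppW n d" "ExC c = ExC d" shows "c = d"
proof -
  define e where "e = (\<lambda>w. c w - d w)"
  have se: "suppW n e" using assms by (auto simp: suppW_def e_def)
  have "ExC e = (\<lambda>y. ExC c y - ExC d y)" by (auto simp: e_def algebra_simps sum_subtractf fun_eq_iff)
  then have "ExC e = (\<lambda>y. 0)"
  proof -
    assume E: "ExC e = (\<lambda>y. ExC c y - ExC d y)"
    show "ExC e = (\<lambda>y. 0)"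
    proof
      fix y show "ExC e y = 0" using fun_cong[OF E, of y] fun_cong[OF assms(3), of y] by simp
    qed
  qed
  then have z0: "\<And>y. y \<in> Wn n \<Longrightarrow> 0 < clen n y \<Longrightarrow> ExC e y = 0"
    using fun_cong[OF \<open>ExC e = (\<lambda>y. 0)\<close>] by simp
  have "\<And>w. 0 < clen n w \<Longrightarrow> e w = 0" by (rule top_zero[OF se z0])
  moreover have "e id = 0"
  proof -
    have "ExC e id = e id"
      using eval_Ex[OF id_Wn, of e] \<open>\<And>w. 0 < clen n w \<Longrightarrow> e w = 0\<close> by (auto intro!: sum.neutral)
    then show ?thesis using fun_cong[OF \<open>ExC e = (\<lambda>y. 0)\<close>, of id] by simp
  qed
  ultimately have "\<And>w. e w = 0" using se clen_zero[OF n] by (metis gr0I suppW_def)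
  then show ?thesis by (auto simp: e_def fun_eq_iff)
qed

lemma Ex_exists_aux: "\<forall>m. suppW n m \<longrightarrow> (\<forall>y. m y \<noteq> 0 \<longrightarrow> clen n y < k) \<longrightarrow> (\<exists>c. suppW n c \<and> m = ExC c)"
proof (induction k)
  case 0
  show ?case by (auto intro!: exI[of _ "\<lambda>w. 0"] simp: suppW_def fun_eq_iff)
next
  case (Suc k)
  show ?case
  proof (intro allI impI)
    fix m :: "'g hmod" assume sm: "suppW n m" and bd: "\<forall>y. m y \<noteq> 0 \<longrightarrow> clen n y < Suc k"
    define Z where "Z = {z \<in> Wn n. clen n z = k}"
    define m' where "m' = (\<lambda>y. m y - (\<Sum>z\<in>Z. m z * KK z y))"
    have sm': "suppW n m'" using sm K_supp by (auto simp: suppW_def m'_def Z_def intro!: sum.neutral)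
    have bd': "\<forall>y. m' y \<noteq> 0 \<longrightarrow> clen n y < k"
    proof (intro allI impI, rule ccontr)
      fix y assume ne: "m' y \<noteq> 0" and ge: "\<not> clen n y < k"
      have y: "y \<in> Wn n" using sm' ne by (auto simp: suppW_def)
      have KZ: "KK z y = 0" if "z \<in> Z" "z \<noteq> y" for z
        using K_tri[of z y] that ge by (auto simp: Z_def)
      show False
      proof (cases "clen n y = k")
        case True
        then have yZ: "y \<in> Z" using y by (simp add: Z_def)
        have "(\<Sum>z\<in>Z. m z * KK z y) = m y * KK y y + (\<Sum>z\<in>Z - {y}. m z * KK z y)"
          using yZ finite_Wn by (simp add: sum.remove Z_def)
        also have "\<dots> = m y" using K_self[OF y] KZ by (simp add: sum.neutral)
        finally show False using ne by (simp add: m'_def)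
      next
        case False
        then have "m y = 0" using bd ge by force
        moreover have "(\<Sum>z\<in>Z. m z * KK z y) = 0" using KZ False by (intro sum.neutral) (auto simp: Z_def)
        ultimately show False using ne by (simp add: m'_def)
      qed
    qed
    obtain c' where c': "suppW n c'" "m' = ExC c'" using Suc.IH sm' bd' by blast
    define c where "c = (\<lambda>w. c' w + (if w \<in> Z then m w else 0))"
    have sc: "suppW n c" using c' by (auto simp: suppW_def c_def Z_def)
    have "ExC c = (\<lambda>y. ExC c' y + (\<Sum>w\<in>Wn n. (if w \<in> Z then m w else 0) * KK w y))"
      by (auto simp: c_def fun_eq_iff distrib_right sum.distrib)
    also have "(\<lambda>y. \<Sum>w\<in>Wn n. (if w \<in> Z then m w else 0) * KK w y) = (\<lambda>y. \<Sum>z\<in>Z. m z * KK z y)"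
    proof
      fix y
      have "(\<Sum>w\<in>Wn n. (if w \<in> Z then m w else 0) * KK w y) = (\<Sum>w\<in>Wn n. if w \<in> Z then m w * KK w y else 0)"
        by (intro sum.cong) auto
      also have "\<dots> = (\<Sum>w\<in>Wn n \<inter> Z. m w * KK w y)" using finite_Wn by (simp add: sum.inter_restrict)
      also have "Wn n \<inter> Z = Z" by (auto simp: Z_def)
      finally show "(\<Sum>w\<in>Wn n. (if w \<in> Z then m w else 0) * KK w y) = (\<Sum>z\<in>Z. m z * KK z y)" by simp
    qed
    finally have E: "ExC c = (\<lambda>y. ExC c' y + (\<Sum>z\<in>Z. m z * KK z y))" .
    have "ExC c = m"
    proof
      fix y
      have "m y - (\<Sum>z\<in>Z. m z * KK z y) = ExC c' y" using fun_cong[OF c'(2), of y] by (simp add: m'_def)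
      then show "ExC c y = m y" using fun_cong[OF E, of y] by (simp add: algebra_simps)
    qed
    then show "\<exists>c. suppW n c \<and> m = ExC c" using sc by blast
  qed
qed

lemma Ex_exists: assumes "suppW n m" shows "\<exists>c. suppW n c \<and> m = ExC c"
proof -
  define k where "k = Suc (Max (clen n ` Wn n))"
  have "\<forall>y\<in>Wn n. clen n y < k" using finite_Wn by (auto simp: k_def less_Suc_eq_le intro: Max_ge)
  then have "\<forall>y. m y \<noteq> 0 \<longrightarrow> clen n y < k" using assms by (auto simp: suppW_def)
  then show ?thesis using Ex_exists_aux assms by blast
qed

lemma coeffC_eq: assumes "suppW n c" "m = ExC c" shows "coeffC n a b x m = c x"
proof -
  have "(THE c. (\<forall>w. w \<notin> Wn n \<longrightarrow> c w = 0) \<and> m = ExC c) = c"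
    by (rule the_equality) (use assms Ex_unique in \<open>auto simp: suppW_def\<close>)
  then show ?thesis by (simp add: coeffC_def)
qed

lemma coeff_bar:
  assumes c: "suppW n c" and m: "m = ExC c" and bm: "barH n a b m = m"
  shows "barA (c w) = c w"
proof -
  have "barH n a b m = ExC (\<lambda>w. barA (c w))"
    unfolding m barH_lin using K_bar by (auto intro!: sum.cong)
  then have "ExC (\<lambda>w. barA (c w)) = ExC c" using bm m by simp
  moreover have "suppW n (\<lambda>w. barA (c w))" using c by (simp add: suppW_def)
  ultimately have "(\<lambda>w. barA (c w)) = c" using Ex_unique c by blast
  then show ?thesis by (metis)
qed

lemma supp_hC:
  assumes w: "w \<in> Wn n" and s: "s \<in> Sgens n" and y: "y \<in> Wn n" and ne: "hC n a b s (KK w) y \<noteq> 0"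
  shows "y = w \<circ> s \<or> clen n y \<le> clen n w"
proof -
  have "KK w (y \<circ> s) \<noteq> 0 \<or> KK w y \<noteq> 0"
  proof (rule ccontr)
    assume "\<not> (KK w (y \<circ> s) \<noteq> 0 \<or> KK w y \<noteq> 0)"
    then have "KK w (y \<circ> s) = 0" "KK w y = 0" by auto
    then have "hC n a b s (KK w) y = 0" by (simp add: hC_def rmulT_eq)
    with ne show False by simp
  qed
  then show ?thesis
  proof
    assume "KK w (y \<circ> s) \<noteq> 0"
    then have "y \<circ> s = w \<or> clen n (y \<circ> s) < clen n w" using K_tri[OF w] by blast
    moreover have "y \<circ> s = w \<Longrightarrow> y = w \<circ> s" using Sgens_invol[OF s] by (metis comp_assoc comp_id)
    moreover have "clen n y \<le> clen n (y \<circ> s) + 1" using clen_gen[OF n y s] by auto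
    ultimately show ?thesis by auto
  next
    assume "KK w y \<noteq> 0"
    then show ?thesis using K_tri[OF w] by force
  qed
qed

lemma supp_R:
  assumes w: "w \<in> Wn n" and s: "s \<in> Sgens n" and y: "y \<in> Wn n" and ne: "rmulT n a b s (KK w) y \<noteq> 0"
  shows "y = w \<circ> s \<or> clen n y \<le> clen n w"
proof -
  have "KK w (y \<circ> s) \<noteq> 0 \<or> KK w y \<noteq> 0"
  proof (rule ccontr)
    assume "\<not> (KK w (y \<circ> s) \<noteq> 0 \<or> KK w y \<noteq> 0)"
    then have "KK w (y \<circ> s) = 0" "KK w y = 0" by auto
    then have "rmulT n a b s (KK w) y = 0" by (simp add: rmulT_eq)
    with ne show False by simp
  qed
  then show ?thesis
  proof
    assume "KK w (y \<circ> s) \<noteq> 0"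
    then have "y \<circ> s = w \<or> clen n (y \<circ> s) < clen n w" using K_tri[OF w] by blast
    moreover have "y \<circ> s = w \<Longrightarrow> y = w \<circ> s" using Sgens_invol[OF s] by (metis comp_assoc comp_id)
    moreover have "clen n y \<le> clen n (y \<circ> s) + 1" using clen_gen[OF n y s] by auto
    ultimately show ?thesis by auto
  next
    assume "KK w y \<noteq> 0"
    then show ?thesis using K_tri[OF w] by force
  qed
qed



lemma hC_hecke: "s \<in> Sgens n \<Longrightarrow> hC n a b s \<in> hecke n a b"
proof -
  assume s: "s \<in> Sgens n"
  have "(\<lambda>m y. rmulT n a b s m y + (\<lambda>m y. vinv a b s * m y) m y) \<in> hecke n a b"
    by (rule hecke.add[OF hecke.gen[OF s] hecke.scal])
  then show ?thesis by (simp add: hC_def[abs_def])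
qed

lemma dirA:
  assumes w: "w \<in> Wn n" and s: "s \<in> Sgens n" and up: "clen n (w \<circ> s) = clen n w + 1"
  shows "arrowR n a b (w \<circ> s) w"
proof -
  define w' where "w' = w \<circ> s"
  have w': "w' \<in> Wn n" using Wn_comp_r[OF n s w] by (simp add: w'_def)
  have w's: "w' \<circ> s = w" using Sgens_invol[OF s] by (simp add: w'_def comp_assoc)
  define m where "m = rmulT n a b s (KLC n a b w)"
  have sm: "suppW n m" using suppW_R[OF s K_supp[OF w]] by (simp add: m_def)
  obtain c where c: "suppW n c" "m = ExC c" using Ex_exists[OF sm] by blast
  have top: "\<And>v. clen n w + 1 < clen n v \<Longrightarrow> c v = 0"
  proof (rule top_zero[OF c(1)])
    fix y assume y: "y \<in> Wn n" and ly: "clen n w + 1 < clen n y"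
    show "ExC c y = 0"
    proof (rule ccontr)
      assume "ExC c y \<noteq> 0"
      then have "rmulT n a b s (KLC n a b w) y \<noteq> 0" using c(2) by (simp add: m_def)
      then have "y = w \<circ> s \<or> clen n y \<le> clen n w" using supp_R[OF w s y] by blast
      then show False using ly up by auto
    qed
  qed
  have "ExC c w' = c w'"
    using eval_Ex[OF w', where c=c] top up by (auto simp: w'_def intro!: sum.neutral)
  moreover have "m w' = 1"
  proof -
    have "w' \<noteq> w" using up by (auto simp: w'_def)
    then have "KLC n a b w w' = 0" using K_tri[OF w, where y=w'] up by (auto simp: w'_def)
    then show ?thesis using K_self[OF w] w's by (simp add: m_def rmulT_eq)
  qed
  ultimately have "c w' = 1" using c(2) by simp
  then have "coeffC n a b w' (rmulT n a b s (KLC n a b w)) \<noteq> 0"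
    using coeffC_eq[OF c(1)] c(2) by (simp add: m_def)
  then show ?thesis using w w' hecke.gen[OF s] by (auto simp: arrowR_def w'_def)
qed

lemma vpar_sgen: "1 \<le> i \<Longrightarrow> vpar a b (sgen i) = expo a" by (simp add: vpar_def tgen_ne_sgen[symmetric])
lemma vinv_sgen: "1 \<le> i \<Longrightarrow> vinv a b (sgen i) = expo (- a)" by (simp add: vinv_def tgen_ne_sgen[symmetric])
lemma cpar_sgen: "1 \<le> i \<Longrightarrow> cpar a b (sgen i) = expo a - expo (- a)" by (simp add: cpar_def vpar_sgen vinv_sgen)

lemma step1:
  assumes a: "0 < a" and w: "w \<in> Wn n" and i: "1 \<le> i" "i \<le> int n - 1"
    and up: "clen n (w \<circ> sgen i) = clen n w + 1"
  shows "KLC n a b (w \<circ> sgen i) w = expo (- a)"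
proof -
  define s where "s = sgen i"
  have s: "s \<in> Sgens n" using i by (auto simp: Sgens_def s_def)
  define w' where "w' = w \<circ> s"
  have w': "w' \<in> Wn n" using Wn_comp_r[OF n s w] by (simp add: w'_def)
  have w's: "w' \<circ> s = w" using Sgens_invol[OF s] by (simp add: w'_def comp_assoc)
  have up': "clen n w' = clen n w + 1" using up by (simp add: w'_def s_def)
  define m where "m = hC n a b s (KLC n a b w)"
  have sm: "suppW n m" unfolding m_def by (rule suppW_hC[OF s K_supp[OF w]])
  have bm: "barH n a b m = m" using barH_hC[OF s K_supp[OF w]] K_bar[OF w] by (simp add: m_def)
  obtain d where d: "suppW n d" "m = ExC d" using Ex_exists[OF sm] by blast
  have bd: "\<And>v. barA (d v) = d v" using coeff_bar[OF d bm] .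
  have top: "\<And>v. clen n w + 1 < clen n v \<Longrightarrow> d v = 0"
  proof (rule top_zero[OF d(1)])
    fix y assume y: "y \<in> Wn n" and ly: "clen n w + 1 < clen n y"
    show "ExC d y = 0"
    proof (rule ccontr)
      assume "ExC d y \<noteq> 0"
      then have "hC n a b s (KLC n a b w) y \<noteq> 0" using d(2) by (simp add: m_def)
      then have "y = w \<circ> s \<or> clen n y \<le> clen n w" using supp_hC[OF w s y] by blast
      then show False using ly up' by (auto simp: w'_def)
    qed
  qed
  have lev: "d v = 0" if v: "v \<in> Wn n" "clen n v = clen n w + 1" "v \<noteq> w'" for v
  proof -
    have "ExC d v = d v" using eval_Ex[OF v(1), where c=d] top v(2) by (auto intro!: sum.neutral)
    moreover have "m v = 0"
    proof (rule ccontr)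
      assume "m v \<noteq> 0"
      then have "v = w \<circ> s \<or> clen n v \<le> clen n w" using supp_hC[OF w s v(1)] by (simp add: m_def)
      then show False using v by (auto simp: w'_def)
    qed
    ultimately show ?thesis using d(2) by simp
  qed
  have "w' \<noteq> w" using up' by auto
  then have Kww': "KLC n a b w w' = 0" using K_tri[OF w, where y=w'] up' by auto
  have "ExC d w' = d w'" using eval_Ex[OF w', where c=d] top up' by (auto intro!: sum.neutral)
  moreover have "m w' = 1"
    using K_self[OF w] Kww' w's by (simp add: m_def hC_def rmulT_eq)
  ultimately have dw': "d w' = 1" using d(2) by simp
  have nz: "d v = 0" if "v \<in> Wn n" "clen n w < clen n v" "v \<noteq> w'" for v
  proof -
    have "clen n v = clen n w + 1 \<or> clen n w + 1 < clen n v" using that(2) by linarith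
    then show ?thesis using top lev that by blast
  qed
  have "ExC d w = d w + (\<Sum>v\<in>{v\<in>Wn n. clen n w < clen n v}. d v * KLC n a b v w)"
    using eval_Ex[OF w] .
  also have "(\<Sum>v\<in>{v\<in>Wn n. clen n w < clen n v}. d v * KLC n a b v w) = d w' * KLC n a b w' w"
    by (rule sum_single) (use finite_Wn w' up' nz in auto)
  finally have e1: "ExC d w = d w + KLC n a b w' w" using dw' by simp
  have "m w = expo (- a)"
  proof -
    have "\<not> clen n (w \<circ> s) < clen n w" using up' by (simp add: w'_def)
    then show ?thesis using K_self[OF w] Kww' i
      by (simp add: m_def hC_def rmulT_eq w'_def s_def vinv_sgen)
  qed
  then have "d w + KLC n a b w' w = expo (- a)" using e1 d(2) by simp
  then have dw: "d w = expo (- a) - KLC n a b w' w" by (metis add_diff_cancel_right')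
  have "w \<noteq> w'" using up' by auto
  then have KA: "KLC n a b w' w \<in> Aneg" using K_neg[OF w'] by auto
  have EA: "expo (- a) \<in> Aneg" using a by (simp add: Aneg_expo)
  have "d w \<in> Aneg" using dw KA EA Aneg_diff by simp
  then have "d w = 0" using Aneg_bar_zero bd by blast
  then show ?thesis using dw by (simp add: w'_def s_def)
qed



lemma dirB:
  assumes a: "0 < a" and w: "w \<in> Wn n" and i: "1 \<le> i" "i \<le> int n - 1" and j: "1 \<le> j" "j \<le> int n - 1"
    and up: "clen n (w \<circ> sgen i) = clen n w + 1"
    and up2: "clen n (w \<circ> sgen i \<circ> sgen j) = clen n (w \<circ> sgen i) + 1"
    and dn: "clen n (w \<circ> sgen j) + 1 = clen n w"
  shows "arrowR n a b w (w \<circ> sgen i)"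
proof -
  define t where "t = sgen j"
  have t: "t \<in> Sgens n" using j by (auto simp: Sgens_def t_def)
  define w' where "w' = w \<circ> sgen i"
  have w': "w' \<in> Wn n" using Wn_comp_r[OF n _ w] i by (auto simp: w'_def Sgens_def)
  define u where "u = w' \<circ> t"
  have u: "u \<in> Wn n" using Wn_comp_r[OF n t w'] by (simp add: u_def)
  have ut: "u \<circ> t = w'" using Sgens_invol[OF t] by (simp add: u_def comp_assoc)
  define L where "L = clen n w"
  have cw': "clen n w' = L + 1" using up by (simp add: w'_def L_def)
  have cu: "clen n u = L + 2" using up2 cw' by (simp add: u_def t_def w'_def)
  have cwt: "clen n (w \<circ> t) + 1 = L" using dn by (simp add: t_def L_def)
  have Kw'w: "KLC n a b w' w = expo (- a)" using step1[OF a w i up] by (simp add: w'_def)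
  define m where "m = hC n a b t (KLC n a b w')"
  have sm: "suppW n m" unfolding m_def by (rule suppW_hC[OF t K_supp[OF w']])
  have bm: "barH n a b m = m" using barH_hC[OF t K_supp[OF w']] K_bar[OF w'] by (simp add: m_def)
  obtain e where e: "suppW n e" "m = ExC e" using Ex_exists[OF sm] by blast
  have be: "\<And>v. barA (e v) = e v" using coeff_bar[OF e bm] .
  have top: "\<And>v. L + 2 < clen n v \<Longrightarrow> e v = 0"
  proof (rule top_zero[OF e(1)])
    fix y assume y: "y \<in> Wn n" and ly: "L + 2 < clen n y"
    show "ExC e y = 0"
    proof (rule ccontr)
      assume "ExC e y \<noteq> 0"
      then have "hC n a b t (KLC n a b w') y \<noteq> 0" using e(2) by (simp add: m_def)
      then have "y = w' \<circ> t \<or> clen n y \<le> clen n w'" using supp_hC[OF w' t y] by blast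
      then show False using ly cu cw' by (auto simp: u_def)
    qed
  qed
  have lev2: "e v = 0" if v: "v \<in> Wn n" "clen n v = L + 2" "v \<noteq> u" for v
  proof -
    have "ExC e v = e v" using eval_Ex[OF v(1), where c=e] top v(2) by (auto intro!: sum.neutral)
    moreover have "m v = 0"
    proof (rule ccontr)
      assume "m v \<noteq> 0"
      then have "v = w' \<circ> t \<or> clen n v \<le> clen n w'" using supp_hC[OF w' t v(1)] by (simp add: m_def)
      then show False using v cw' by (auto simp: u_def)
    qed
    ultimately show ?thesis using e(2) by simp
  qed
  have "u \<noteq> w'" using cu cw' by auto
  then have Kw'u: "KLC n a b w' u = 0" using K_tri[OF w', where y=u] cu cw' by auto
  have "ExC e u = e u" using eval_Ex[OF u, where c=e] top cu by (auto intro!: sum.neutral)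
  moreover have "m u = 1"
    using K_self[OF w'] Kw'u ut cu cw' by (simp add: m_def hC_def rmulT_eq)
  ultimately have eu: "e u = 1" using e(2) by simp
  have nz2: "e v = 0" if "v \<in> Wn n" "L + 1 < clen n v" "v \<noteq> u" for v
  proof -
    have "clen n v = L + 2 \<or> L + 2 < clen n v" using that(2) by linarith
    then show ?thesis using top lev2 that by blast
  qed
  have sum_u: "(\<Sum>v\<in>{v\<in>Wn n. k < clen n v}. e v * KLC n a b v z) = KLC n a b u z"
    if k: "k < L + 2" and nzk: "\<And>v. v \<in> Wn n \<Longrightarrow> k < clen n v \<Longrightarrow> v \<noteq> u \<Longrightarrow> e v = 0" for k z
  proof -
    have "(\<Sum>v\<in>{v\<in>Wn n. k < clen n v}. e v * KLC n a b v z) = e u * KLC n a b u z"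
      by (rule sum_single) (use finite_Wn u cu k nzk in auto)
    then show ?thesis using eu by simp
  qed
  have lev1: "e z = 0" if z: "z \<in> Wn n" "clen n z = L + 1" for z
  proof -
    have "ExC e z = e z + KLC n a b u z"
      using eval_Ex[OF z(1), where c=e] sum_u[of "L + 1" z] nz2 z(2) by simp
    moreover have "m z \<in> Aneg"
    proof (cases "z = w'")
      case True
      have "\<not> clen n (w' \<circ> t) < clen n w'" using cu cw' by (simp add: u_def)
      then have "m z = expo (- a)"
        using True K_self[OF w'] Kw'u j by (simp add: m_def hC_def rmulT_eq u_def t_def vinv_sgen)
      then show ?thesis using a by (simp add: Aneg_expo)
    next
      case False
      have Kz: "KLC n a b w' z = 0" using K_tri[OF w', where y=z] False z cw' by auto
      have "z \<circ> t \<noteq> w'"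
      proof
        assume "z \<circ> t = w'"
        then have "z = u" using Sgens_invol[OF t] by (metis comp_assoc comp_id u_def)
        then show False using z cu by simp
      qed
      then have "KLC n a b w' (z \<circ> t) \<in> Aneg" using K_neg[OF w'] by simp
      then show ?thesis using Kz by (simp add: m_def hC_def rmulT_eq)
    qed
    moreover have "z \<noteq> u" using z cu by auto
    then have "KLC n a b u z \<in> Aneg" using K_neg[OF u, where y=z] by auto
    ultimately have "e z \<in> Aneg" using e(2) Aneg_diff by (metis add_diff_cancel_right')
    then show ?thesis using Aneg_bar_zero be by blast
  qed
  have nz1: "e v = 0" if "v \<in> Wn n" "L < clen n v" "v \<noteq> u" for v
  proof (cases "clen n v = L + 1")
    case True then show ?thesis using lev1 that by simp
  next
    case False then show ?thesis using nz2 that by simp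
  qed
  have ew: "ExC e w = e w + KLC n a b u w"
    using eval_Ex[OF w, where c=e] sum_u[of L w] nz1 by (simp add: L_def)
  have "m w = KLC n a b w' (w \<circ> t) + 1"
  proof -
    have "clen n (w \<circ> t) < clen n w" using cwt by (simp add: L_def)
    then have "m w = KLC n a b w' (w \<circ> t) + (expo a - expo (- a)) * expo (- a) + expo (- a) * expo (- a)"
      using Kw'w j by (simp add: m_def hC_def rmulT_eq t_def cpar_sgen vinv_sgen)
    moreover have "(expo a - expo (- a)) * expo (- a) + expo (- a) * expo (- a) = (1 :: 'g grpring)"
      by (simp add: algebra_simps expo_mult)
    ultimately show ?thesis by (metis add.assoc)
  qed
  then have eweq: "e w - 1 = KLC n a b w' (w \<circ> t) - KLC n a b u w" using ew e(2) by (simp add: algebra_simps)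
  have "w \<circ> t \<noteq> w'" using cwt cw' by auto
  then have "KLC n a b w' (w \<circ> t) \<in> Aneg" using K_neg[OF w'] by simp
  moreover have "w \<noteq> u" using cu by (auto simp: L_def)
  then have "KLC n a b u w \<in> Aneg" using K_neg[OF u, where y=w] by auto
  ultimately have "e w - 1 \<in> Aneg" using eweq Aneg_diff by simp
  moreover have "barA (e w - 1) = e w - 1" using be by (simp add: barA_diff)
  ultimately have "e w - 1 = 0" using Aneg_bar_zero by blast
  then have "e w = 1" by simp
  then have "coeffC n a b w (hC n a b t (KLC n a b w')) \<noteq> 0"
    using coeffC_eq[OF e(1)] e(2) by (simp add: m_def)
  then show ?thesis using w w' hC_hecke[OF t] by (auto simp: arrowR_def w'_def)
qed

end


theorem lemma7p1:
  fixes a b :: "'g::linordered_ab_group_add" and n :: nat and w w' :: "int \<Rightarrow> int"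
  assumes "a > 0" and "b > 0"
    and "w \<in> Wn n" and "w' \<in> Wn n"
    and "smile1 n w w'"
  shows "simR n a b w w'"
proof -
  obtain i where ii: "(2 \<le> i \<and> i \<le> int n - 1 \<and> w i < w (i - 1) \<and> w (i - 1) < w (i + 1)) \<or>
      (1 \<le> i \<and> i \<le> int n - 2 \<and> w i < w (i + 2) \<and> w (i + 2) < w (i + 1))" and w': "w' = w \<circ> sgen i"
    using assms(5) by (auto simp: smile1_def)
  have n: "1 \<le> n" using ii by auto
  have w: "w \<in> Wn n" using assms(3) .
  obtain j where i: "1 \<le> i" "i \<le> int n - 1" and j: "1 \<le> j" "j \<le> int n - 1"
    and up: "clen n (w \<circ> sgen i) = clen n w + 1"
    and up2: "clen n (w \<circ> sgen i \<circ> sgen j) = clen n (w \<circ> sgen i) + 1"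
    and dn: "clen n (w \<circ> sgen j) + 1 = clen n w"
  proof -
    have wi: "w \<circ> sgen i \<in> Wn n" using ii Wn_comp[OF w sgen_Wn[of i n]] by auto
    from ii show ?thesis
    proof
      assume c: "2 \<le> i \<and> i \<le> int n - 1 \<and> w i < w (i - 1) \<and> w (i - 1) < w (i + 1)"
      have i1: "1 \<le> i" "i \<le> int n - 1" using c by auto
      have j1: "1 \<le> i - 1" "i - 1 \<le> int n - 1" using c by auto
      have "int (clen n (w \<circ> sgen i)) = int (clen n w) + 1" using clen_sgen[OF n w i1] c by simp
      moreover have "int (clen n (w \<circ> sgen i \<circ> sgen (i - 1))) = int (clen n (w \<circ> sgen i)) + 1"
        using clen_sgen[OF n wi j1] c by (simp add: sgen_def)
      moreover have "int (clen n (w \<circ> sgen (i - 1))) = int (clen n w) - 1"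
        using clen_sgen[OF n w j1] c by simp
      ultimately show ?thesis using that[OF i1 j1] by simp
    next
      assume c: "1 \<le> i \<and> i \<le> int n - 2 \<and> w i < w (i + 2) \<and> w (i + 2) < w (i + 1)"
      have i1: "1 \<le> i" "i \<le> int n - 1" using c by auto
      have j1: "1 \<le> i + 1" "i + 1 \<le> int n - 1" using c by auto
      have "int (clen n (w \<circ> sgen i)) = int (clen n w) + 1" using clen_sgen[OF n w i1] c by simp
      moreover have "int (clen n (w \<circ> sgen i \<circ> sgen (i + 1))) = int (clen n (w \<circ> sgen i)) + 1"
        using clen_sgen[OF n wi j1] c by (simp add: sgen_def add.assoc)
      moreover have "int (clen n (w \<circ> sgen (i + 1))) = int (clen n w) - 1"
        using clen_sgen[OF n w j1] c by (simp add: add.assoc)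
      ultimately show ?thesis using that[OF i1 j1] by simp
    qed
  qed
  have s: "sgen i \<in> Sgens n" using i by (auto simp: Sgens_def)
  have A: "arrowR n a b w' w" using dirA[OF n w s up] w' by simp
  have B: "arrowR n a b w w'" using dirB[OF n assms(1) w i j up up2 dn] w' by simp
  show ?thesis using A B by (auto simp: simR_def leR_def)
qed


end
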